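(* Let $k$ be a field, $p \in k[t]$ a monic irreducible separable polynomial of degree $d$, $\alpha$ a root of $p$ in an algebraic closure of $k$, and $K = k(\alpha)$. Let $\lambda$ be a partition of $n$. Then the centralizer of $J_\lambda(C_p)$ in $M_{nd}(k)$ is isomorphic as a $k$-algebra to $K[x]_\lambda$.
   Context: $C_p$ is the $d\times d$ companion matrix of $p$, i.e. the matrix of multiplication by $\alpha$ on $K$ with respect to the $k$-basis $1,\alpha,\dots,\alpha^{d-1}$. For a $d\times d$ matrix $A$, $J_m(A)$ is the $md\times md$ block matrix with $A$ in each diagonal block, $I_d$ in each block directly below the diagonal, and $0$ elsewhere; $J_\lambda(A) = \bigoplus_i J_{\lambda_i}(A)$. For a field $K$ and partition $\lambda=(\lambda_1\ge\dots\ge\lambda_s)$, $K[x]_\lambda$ is the quotient $\mathcal{A}/\mathcal{I}$, where $\mathcal{A}$ is the algebra of $s\times s$ matrices over $K[x]$ whose $(i,j)$ entry lies in $x^{\max(0,\lambda_i-\lambda_j)}K[x]$, and $\mathcal{I}$ is the two-sided ideal of matrices whose entries in row $i$ all lie in $x^{\lambda_i}K[x]$. *)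

theory Defs
  imports "Jordan_Normal_Form.Matrix" "HOL-Algebra.QuotRing"
    "HOL-Computational_Algebra.Polynomial"
begin

text \<open>Companion matrix of a (monic) polynomial p of degree d: the matrix of
  multiplication by a root alpha w.r.t. the basis 1, alpha, ..., alpha^(d-1).\<close>
definition companion_mat :: "'a::comm_ring_1 poly \<Rightarrow> 'a mat" where
  "companion_mat p = mat (degree p) (degree p)
     (\<lambda>(i,j). if Suc j < degree p then (if i = Suc j then 1 else 0)
              else - coeff p i)"

definition jordan_block_mat :: "nat \<Rightarrow> 'a::zero_neq_one mat \<Rightarrow> 'a mat" where
  "jordan_block_mat m A = (let d = dim_row A in
     mat (m * d) (m * d) (\<lambda>(i,j).
       if i div d = j div d then A $$ (i mod d, j mod d)
       else if i div d = Suc (j div d) then (if i mod d = j mod d then 1 else 0)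
       else 0))"

fun jordan_mat :: "nat list \<Rightarrow> 'a::zero_neq_one mat \<Rightarrow> 'a mat" where
  "jordan_mat [] A = 0\<^sub>m 0 0"
| "jordan_mat (m # ms) A =
     four_block_mat (jordan_block_mat m A)
       (0\<^sub>m (m * dim_row A) (sum_list ms * dim_row A))
       (0\<^sub>m (sum_list ms * dim_row A) (m * dim_row A))
       (jordan_mat ms A)"

definition is_partition :: "nat list \<Rightarrow> nat \<Rightarrow> bool" where
  "is_partition lam n \<longleftrightarrow> sorted (rev lam) \<and> (\<forall>m\<in>set lam. 0 < m) \<and> sum_list lam = n"

definition separable_poly :: "'a::field poly \<Rightarrow> bool" where
  "separable_poly p \<longleftrightarrow> coprime p (pderiv p)"

definition centralizer_ring :: "'a::comm_ring_1 mat \<Rightarrow> 'a mat ring" where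
  "centralizer_ring J = \<lparr> carrier = {B \<in> carrier_mat (dim_row J) (dim_row J). B * J = J * B},
     monoid.mult = (*), one = 1\<^sub>m (dim_row J), zero = 0\<^sub>m (dim_row J) (dim_row J), add = (+) \<rparr>"

text \<open>The algebra \<A>: s x s matrices over K[x] whose (i,j) entry lies in
  x^(max 0 (lambda_i - lambda_j)) K[x].  (nat subtraction = max with 0.)\<close>
definition part_alg_carrier :: "nat list \<Rightarrow> 'b::field poly mat set" where
  "part_alg_carrier lam = {M \<in> carrier_mat (length lam) (length lam).
     \<forall>i < length lam. \<forall>j < length lam. monom 1 (lam ! i - lam ! j) dvd M $$ (i, j)}"

definition part_alg :: "nat list \<Rightarrow> 'b::field poly mat ring" where
  "part_alg lam = \<lparr> carrier = part_alg_carrier lam,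
     monoid.mult = (*), one = 1\<^sub>m (length lam), zero = 0\<^sub>m (length lam) (length lam),
     add = (+) \<rparr>"

definition part_ideal :: "nat list \<Rightarrow> 'b::field poly mat set" where
  "part_ideal lam = {M \<in> part_alg_carrier lam.
     \<forall>i < length lam. \<forall>j < length lam. monom 1 (lam ! i) dvd M $$ (i, j)}"

definition trunc_poly_alg :: "nat list \<Rightarrow> 'b::field poly mat set ring" where
  "trunc_poly_alg lam = part_alg lam Quot part_ideal lam"

end

theory Submission
  imports Defs "Jordan_Normal_Form.Char_Poly" "HOL-Algebra.Subrings"
    "HOL-Computational_Algebra.Polynomial_Factorial" "HOL-Computational_Algebra.Euclidean_Algorithm"
begin
hide_const (open) UnivPoly.monom UnivPoly.coeff

lemma neg_from_sum0: fixes a b :: "'c::ab_group_add" shows "0 = a + b \<Longrightarrow> - a = b"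
  by (simp add: add_eq_0_iff)

locale cpx =
  fixes p :: "'a::field poly" and \<phi> :: "'a \<Rightarrow> 'b::field" and \<alpha> :: 'b
  assumes hom: "field_hom \<phi>"
    and monic: "lead_coeff p = 1"
    and irr: "irreducible p"
    and sep: "separable_poly p"
    and root: "poly (map_poly \<phi> p) \<alpha> = 0"
    and gen: "\<forall>y::'b. \<exists>q::'a poly. y = poly (map_poly \<phi> q) \<alpha>"
begin

sublocale field_hom \<phi> by (rule hom)
interpretation mp: map_poly_comm_ring_hom \<phi> by unfold_locales

definition pe :: "'a poly \<Rightarrow> 'b" where "pe q = poly (map_poly \<phi> q) \<alpha>"

lemma pe_add[simp]: "pe (q + r) = pe q + pe r"
  unfolding pe_def by (simp add: mp.hom_add)
lemma pe_mult[simp]: "pe (q * r) = pe q * pe r"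
  unfolding pe_def by (simp add: mp.hom_mult)
lemma pe_diff[simp]: "pe (q - r) = pe q - pe r"
  unfolding pe_def by (simp add: mp.hom_minus)
lemma pe_1[simp]: "pe 1 = 1" unfolding pe_def by simp
lemma pe_0[simp]: "pe 0 = 0" unfolding pe_def by simp
lemma pe_monom[simp]: "pe (monom c i) = \<phi> c * \<alpha> ^ i"
  unfolding pe_def by (simp add: map_poly_monom poly_monom)
lemma pe_sum: "pe (sum f A) = (\<Sum>x\<in>A. pe (f x))"
  by (induct A rule: infinite_finite_induct) auto
lemma pe_p[simp]: "pe p = 0" using root unfolding pe_def .

lemma deg_pos: "degree p > 0"
proof -
  have p0: "p \<noteq> 0" and "\<not> is_unit p" using irr unfolding irreducible_def by blast+
  thus ?thesis using is_unit_iff_degree[OF p0] by simp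
qed

lemma pe_mod: "pe (q mod p) = pe q"
proof -
  have "pe q = pe (q div p * p + q mod p)" by (simp only: div_mult_mod_eq)
  also have "\<dots> = pe (q mod p)" by (simp only: pe_add pe_mult pe_p mult_zero_right add_0)
  finally show ?thesis by simp
qed

lemma pe_const[simp]: "pe [:c:] = \<phi> c"
  using pe_monom[of c 0] by (simp add: monom_0)

lemma pe_inj0: assumes "degree r < degree p" "pe r = 0" shows "r = 0"
proof (rule ccontr)
  assume r: "r \<noteq> 0"
  define S where "S = {q. q \<noteq> 0 \<and> pe q = 0}"
  have rS: "r \<in> S" using r assms(2) unfolding S_def by blast
  define m where "m = (LEAST k. \<exists>q\<in>S. degree q = k)"
  have "\<exists>q\<in>S. degree q = m" unfolding m_def by (rule LeastI[of _ "degree r"]) (use rS in blast)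
  then obtain r0 where r0S: "r0 \<in> S" and dr0: "degree r0 = m" by blast
  have minim: "m \<le> degree q" if "q \<in> S" for q
    unfolding m_def by (rule Least_le) (use that in blast)
  have r00: "r0 \<noteq> 0" and per0: "pe r0 = 0" using r0S unfolding S_def by auto
  have "p mod r0 = 0"
  proof (rule ccontr)
    assume nz: "p mod r0 \<noteq> 0"
    have "degree (p mod r0) < degree r0" using degree_mod_less'[OF r00 nz] .
    moreover have "pe (p mod r0) = 0"
    proof -
      have "pe p = pe (p div r0 * r0 + p mod r0)" by (simp only: div_mult_mod_eq)
      hence "0 = pe (p div r0) * pe r0 + pe (p mod r0)" by (simp only: pe_add pe_mult pe_p)
      thus ?thesis using per0 by simp
    qed
    hence "p mod r0 \<in> S" using nz unfolding S_def by blast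
    ultimately show False using minim dr0 by fastforce
  qed
  hence "r0 dvd p" by (simp add: dvd_eq_mod_eq_0)
  hence "p dvd r0 \<or> is_unit r0" using irr unfolding irreducible_altdef by blast
  thus False
  proof
    assume "p dvd r0"
    hence "degree p \<le> degree r0" using r00 by (rule dvd_imp_degree_le)
    moreover have "degree r0 \<le> degree r" using minim[OF rS] dr0 by simp
    ultimately show False using assms(1) by simp
  next
    assume "is_unit r0"
    hence "degree r0 = 0" using is_unit_iff_degree[OF r00] by simp
    hence "r0 = [:coeff r0 0:]" by (rule degree_0_id[symmetric])
    hence "\<phi> (coeff r0 0) = 0" using per0 pe_const by metis
    hence "coeff r0 0 = 0" by simp
    hence "r0 = 0" using \<open>r0 = [:coeff r0 0:]\<close> by simp
    thus False using r00 by simp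
  qed
qed

definition rep :: "'b \<Rightarrow> 'a poly" where
  "rep y = (SOME r. degree r < degree p \<and> pe r = y)"

lemma rep_ex: "\<exists>r. degree r < degree p \<and> pe r = y"
proof -
  obtain q where "y = pe q" using gen unfolding pe_def by blast
  moreover have "degree (q mod p) < degree p"
  proof (cases "q mod p = 0")
    case True thus ?thesis using deg_pos by simp
  next
    case False
    have "p \<noteq> 0" using deg_pos by auto
    thus ?thesis using degree_mod_less'[of p q] False by auto
  qed
  moreover have "pe (q mod p) = y" using pe_mod \<open>y = pe q\<close> by simp
  ultimately show ?thesis by blast
qed

lemma rep: "degree (rep y) < degree p" "pe (rep y) = y"
  using someI_ex[OF rep_ex[of y]] unfolding rep_def by auto

lemma rep_unique: assumes "degree r < degree p" "pe r = y" shows "rep y = r"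
proof -
  have "pe (rep y - r) = 0" using rep(2)[of y] assms(2)
    by simp
  moreover have "degree (rep y - r) < degree p"
    by (rule le_less_trans[OF degree_diff_le_max]) (use rep(1)[of y] assms(1) in simp)
  ultimately show ?thesis using pe_inj0 by fastforce
qed

definition coord :: "nat \<Rightarrow> 'b \<Rightarrow> 'a" where "coord i y = coeff (rep y) i"

lemma expand: "y = (\<Sum>i<degree p. \<phi> (coord i y) * \<alpha> ^ i)"
proof -
  have "rep y = (\<Sum>i\<le>degree p - 1. monom (coeff (rep y) i) i)"
    by (rule poly_as_sum_of_monoms'[symmetric]) (use rep(1)[of y] in linarith)
  also have "{..degree p - 1} = {..<degree p}" using deg_pos by auto
  finally have "pe (rep y) = pe (\<Sum>i<degree p. monom (coeff (rep y) i) i)" by simp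
  also have "\<dots> = (\<Sum>i<degree p. \<phi> (coord i y) * \<alpha> ^ i)"
    unfolding pe_sum coord_def by simp
  finally show ?thesis using rep(2) by simp
qed

lemma coord_unique: assumes "y = (\<Sum>i<degree p. \<phi> (c i) * \<alpha> ^ i)" "j < degree p"
  shows "coord j y = c j"
proof -
  let ?r = "\<Sum>i<degree p. monom (c i) i"
  have "degree ?r \<le> degree p - 1"
    by (rule degree_sum_le) (auto intro: order.trans[OF degree_monom_le])
  hence "degree ?r < degree p" using deg_pos by linarith
  moreover have "pe ?r = y" using assms(1) by (simp add: pe_sum)
  ultimately have "rep y = ?r" by (rule rep_unique)
  thus ?thesis unfolding coord_def using assms(2) by (simp add: coeff_sum)
qed


lemma rep_0[simp]: "rep 0 = 0" by (rule rep_unique) (use deg_pos in auto)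

lemma coord_0[simp]: "coord i 0 = 0" unfolding coord_def by simp

lemma coord_add[simp]: "coord i (y + z) = coord i y + coord i z"
proof -
  have "rep (y + z) = rep y + rep z"
    by (rule rep_unique) (auto intro: le_less_trans[OF degree_add_le_max] simp: rep)
  thus ?thesis unfolding coord_def by simp
qed

lemma pe_smult[simp]: "pe (smult c q) = \<phi> c * pe q"
proof -
  have "smult c q = [:c:] * q" by simp
  thus ?thesis by (simp only: pe_mult pe_const)
qed

lemma coord_smult[simp]: "coord i (\<phi> c * y) = c * coord i y"
proof -
  have "rep (\<phi> c * y) = smult c (rep y)"
    by (rule rep_unique) (use deg_pos in \<open>auto intro: le_less_trans[OF degree_smult_le] simp: rep\<close>)
  thus ?thesis unfolding coord_def by simp
qed

lemma coord_sum: "coord i (sum f A) = (\<Sum>x\<in>A. coord i (f x))"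
  by (induct A rule: infinite_finite_induct) auto

lemma coord_ge: "i \<ge> degree p \<Longrightarrow> coord i y = 0"
  unfolding coord_def using rep(1)[of y] by (intro coeff_eq_0) simp

lemma coord_eqI: assumes "\<And>i. i < degree p \<Longrightarrow> coord i y = coord i z" shows "y = z"
proof -
  have "y = (\<Sum>i<degree p. \<phi> (coord i y) * \<alpha> ^ i)" by (rule expand)
  also have "\<dots> = (\<Sum>i<degree p. \<phi> (coord i z) * \<alpha> ^ i)"
    by (rule sum.cong) (simp_all add: assms)
  also have "\<dots> = z" by (rule expand[symmetric])
  finally show ?thesis .
qed

lemma coord_pow: assumes "j < degree p" "i < degree p"
  shows "coord i (\<alpha> ^ j) = (if i = j then 1 else 0)"
proof -
  have "(\<Sum>k<degree p. \<phi> (if k = j then 1 else 0) * \<alpha> ^ k) = (\<Sum>k<degree p. if k = j then \<alpha> ^ k else 0)"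
    by (rule sum.cong) auto
  also have "\<dots> = \<alpha> ^ j" using assms(1) by simp
  finally have "\<alpha> ^ j = (\<Sum>k<degree p. \<phi> (if k = j then 1 else 0) * \<alpha> ^ k)" by simp
  from coord_unique[OF this assms(2)] show ?thesis .
qed

lemma coord_phi: assumes "i < degree p" shows "coord i (\<phi> c) = (if i = 0 then c else 0)"
  using coord_smult[of i c 1] coord_pow[of 0 i] assms deg_pos by simp

lemma coord_alpha_d: assumes "i < degree p" shows "coord i (\<alpha> ^ degree p) = - coeff p i"
proof -
  let ?S = "\<Sum>k<degree p. \<phi> (coeff p k) * \<alpha> ^ k"
  have "p = (\<Sum>k\<le>degree p. monom (coeff p k) k)" by (rule poly_as_sum_of_monoms[symmetric])
  also have "\<dots> = (\<Sum>k<Suc (degree p). monom (coeff p k) k)" by (simp only: lessThan_Suc_atMost)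
  also have "\<dots> = (\<Sum>k<degree p. monom (coeff p k) k) + monom (coeff p (degree p)) (degree p)"
    by (rule sum.lessThan_Suc)
  finally have "pe p = pe ((\<Sum>k<degree p. monom (coeff p k) k) + monom (coeff p (degree p)) (degree p))"
    by (rule arg_cong)
  hence "0 = ?S + \<alpha> ^ degree p" using monic by (simp only: pe_p pe_add pe_sum pe_monom hom_one mult_1)
  hence "- ?S = \<alpha> ^ degree p" by (rule neg_from_sum0)
  moreover have "- ?S = (\<Sum>k<degree p. \<phi> (- coeff p k) * \<alpha> ^ k)"
    unfolding sum_negf[symmetric] by (rule sum.cong) (simp_all add: hom_uminus)
  ultimately have "\<alpha> ^ degree p = (\<Sum>k<degree p. \<phi> (- coeff p k) * \<alpha> ^ k)" by simp
  from coord_unique[OF this assms] show ?thesis .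
qed

definition Emat :: "'b \<Rightarrow> 'a mat" where
  "Emat y = mat (degree p) (degree p) (\<lambda>(r, r'). coord r (y * \<alpha> ^ r'))"

lemma Emat_carrier[simp]: "Emat y \<in> carrier_mat (degree p) (degree p)"
  and Emat_dims[simp]: "dim_row (Emat y) = degree p" "dim_col (Emat y) = degree p"
  unfolding Emat_def by auto

lemma Emat_index[simp]: "r < degree p \<Longrightarrow> r' < degree p \<Longrightarrow> Emat y $$ (r, r') = coord r (y * \<alpha> ^ r')"
  unfolding Emat_def by simp

lemma coord_mult_expand: "coord r (y * z) = (\<Sum>s<degree p. coord r (y * \<alpha> ^ s) * coord s z)"
proof -
  have "y * z = y * (\<Sum>s<degree p. \<phi> (coord s z) * \<alpha> ^ s)"
    using expand[of z] by (rule arg_cong)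
  also have "\<dots> = (\<Sum>s<degree p. \<phi> (coord s z) * (y * \<alpha> ^ s))"
    unfolding sum_distrib_left by (rule sum.cong) (simp_all only: mult.left_commute)
  finally have "coord r (y * z) = coord r (\<Sum>s<degree p. \<phi> (coord s z) * (y * \<alpha> ^ s))"
    by (rule arg_cong)
  also have "\<dots> = (\<Sum>s<degree p. coord s z * coord r (y * \<alpha> ^ s))"
    by (simp only: coord_sum coord_smult)
  finally show ?thesis by (simp only: mult.commute)
qed

lemma Emat_mult: "Emat (y * z) = Emat y * Emat z"
  by (rule eq_matI) (auto simp: scalar_prod_def coord_mult_expand[of _ y "z * _"] mult.assoc
       intro!: sum.cong)

lemma Emat_add: "Emat (y + z) = Emat y + Emat z"
  by (rule eq_matI) (auto simp: distrib_right)

lemma Emat_phi: "Emat (\<phi> c) = c \<cdot>\<^sub>m 1\<^sub>m (degree p)"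
  by (rule eq_matI) (auto simp: coord_pow)

lemma Emat_alpha: "Emat \<alpha> = companion_mat p"
proof (rule eq_matI)
  fix i j assume ij: "i < dim_row (companion_mat p)" "j < dim_col (companion_mat p)"
  hence ij': "i < degree p" "j < degree p" by (auto simp: companion_mat_def)
  have "Emat \<alpha> $$ (i, j) = coord i (\<alpha> ^ Suc j)" using ij' by simp
  also have "\<dots> = companion_mat p $$ (i, j)"
  proof (cases "Suc j < degree p")
    case True thus ?thesis using ij' coord_pow[OF True] by (simp add: companion_mat_def)
  next
    case False
    hence sj: "Suc j = degree p" using ij' by simp
    have "coord i (\<alpha> ^ Suc j) = - coeff p i" unfolding sj by (rule coord_alpha_d[OF ij'(1)])
    thus ?thesis using ij' False by (simp add: companion_mat_def)
  qed
  finally show "Emat \<alpha> $$ (i, j) = companion_mat p $$ (i, j)" .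
qed (auto simp: companion_mat_def)

lemma Emat_col0: "r < degree p \<Longrightarrow> Emat y $$ (r, 0) = coord r y"
  using deg_pos by simp

end

lemma sum_lessThan_add: fixes n :: nat shows "(\<Sum>k<m+n. f k) = (\<Sum>k<m. f k) + (\<Sum>k<n. f (m+k))"
  by (induct n) (simp_all add: add.assoc)

lemma sum_lessThan_mult: fixes n :: nat shows "(\<Sum>w<n*d. f w) = (\<Sum>v<n. \<Sum>s<d. f (v*d + s))"
proof (induct n)
  case (Suc n)
  have "(\<Sum>w<Suc n*d. f w) = (\<Sum>w<n*d + d. f w)" by (simp add: add.commute)
  also have "\<dots> = (\<Sum>w<n*d. f w) + (\<Sum>s<d. f (n*d + s))" by (rule sum_lessThan_add)
  finally show ?case using Suc by simp
qed simp

fun dec :: "nat list \<Rightarrow> nat \<Rightarrow> nat \<times> nat" where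
  "dec [] u = (0, u)"
| "dec (m # ms) u = (if u < m then (0, u) else (Suc (fst (dec ms (u - m))), snd (dec ms (u - m))))"

definition enc :: "nat list \<Rightarrow> nat \<Rightarrow> nat \<Rightarrow> nat" where
  "enc lam i l = sum_list (take i lam) + l"

lemma enc_Cons_0[simp]: "enc (m # ms) 0 l = l" unfolding enc_def by simp
lemma enc_Cons_Suc[simp]: "enc (m # ms) (Suc i) l = m + enc ms i l" unfolding enc_def by simp

lemma dec_props: "u < sum_list lam \<Longrightarrow> fst (dec lam u) < length lam \<and>
   snd (dec lam u) < lam ! fst (dec lam u) \<and> enc lam (fst (dec lam u)) (snd (dec lam u)) = u"
proof (induct lam arbitrary: u)
  case (Cons m ms)
  show ?case
  proof (cases "u < m")
    case False
    hence "u - m < sum_list ms" using Cons(2) by simp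
    from Cons(1)[OF this] False show ?thesis by simp
  qed simp
qed simp

lemma dec_fst: "u < sum_list lam \<Longrightarrow> fst (dec lam u) < length lam" using dec_props by blast
lemma dec_snd: "u < sum_list lam \<Longrightarrow> snd (dec lam u) < lam ! fst (dec lam u)" using dec_props by blast
lemma enc_dec: "u < sum_list lam \<Longrightarrow> enc lam (fst (dec lam u)) (snd (dec lam u)) = u" using dec_props by blast

lemma enc_props: "i < length lam \<Longrightarrow> l < lam ! i \<Longrightarrow> dec lam (enc lam i l) = (i, l) \<and> enc lam i l < sum_list lam"
proof (induct lam arbitrary: i)
  case (Cons m ms)
  show ?case
  proof (cases i)
    case (Suc i')
    hence "i' < length ms" "l < ms ! i'" using Cons(2,3) by auto
    from Cons(1)[OF this] Suc show ?thesis by simp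
  qed (use Cons in simp)
qed simp

lemma dec_enc: "i < length lam \<Longrightarrow> l < lam ! i \<Longrightarrow> dec lam (enc lam i l) = (i, l)" using enc_props by blast
lemma enc_less: "i < length lam \<Longrightarrow> l < lam ! i \<Longrightarrow> enc lam i l < sum_list lam" using enc_props by blast

lemma enc_inj: assumes "i < length lam" "l < lam ! i" "j < length lam" "l' < lam ! j"
  shows "enc lam i l = enc lam j l' \<longleftrightarrow> i = j \<and> l = l'"
proof
  assume "enc lam i l = enc lam j l'"
  hence "dec lam (enc lam i l) = dec lam (enc lam j l')" by simp
  thus "i = j \<and> l = l'" using dec_enc assms by simp
qed simp

lemma dec_eq_iff: "u < sum_list lam \<Longrightarrow> u' < sum_list lam \<Longrightarrow> dec lam u = dec lam u' \<longleftrightarrow> u = u'"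
  using enc_dec by metis

lemma sum_dec: "(\<Sum>u<sum_list lam. f u) = (\<Sum>i<length lam. \<Sum>l<lam ! i. f (enc lam i l))"
proof (induct lam arbitrary: f)
  case (Cons m ms)
  have "(\<Sum>u<sum_list (m # ms). f u) = (\<Sum>u<m. f u) + (\<Sum>u<sum_list ms. f (m + u))"
    by (simp add: sum_lessThan_add)
  also have "(\<Sum>u<sum_list ms. f (m + u)) = (\<Sum>i<length ms. \<Sum>l<ms ! i. f (m + enc ms i l))"
    by (rule Cons)
  finally show ?case by (simp add: sum.lessThan_Suc_shift del: sum.lessThan_Suc)
qed simp

definition jent :: "nat \<Rightarrow> nat list \<Rightarrow> 'a::zero_neq_one mat \<Rightarrow> nat \<Rightarrow> nat \<Rightarrow> 'a" where
  "jent d lam A q q' = (if fst (dec lam (q div d)) = fst (dec lam (q' div d)) then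
      (if snd (dec lam (q div d)) = snd (dec lam (q' div d)) then A $$ (q mod d, q' mod d)
       else if snd (dec lam (q div d)) = Suc (snd (dec lam (q' div d))) \<and> q mod d = q' mod d then 1 else 0)
    else 0)"

lemma jordan_block_dims: "dim_row (jordan_block_mat m A) = m * dim_row A" "dim_col (jordan_block_mat m A) = m * dim_row A"
  unfolding jordan_block_mat_def Let_def by auto

lemma jordan_mat_dims: "dim_row (jordan_mat lam A) = sum_list lam * dim_row A"
   "dim_col (jordan_mat lam A) = sum_list lam * dim_row A"
  by (induct lam) (auto simp: jordan_block_dims distrib_right)

lemma divmod_shift: assumes "m * d \<le> (q::nat)" "0 < d"
  shows "(q - m * d) div d = q div d - m" "(q - m * d) mod d = q mod d" "m \<le> q div d"
proof -
  obtain x where q: "q = x + m * d" using assms(1) by (metis le_add_diff_inverse2)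
  show "(q - m * d) div d = q div d - m" "(q - m * d) mod d = q mod d" "m \<le> q div d"
    unfolding q using assms(2) by simp_all
qed

lemma jordan_mat_index: assumes A: "A \<in> carrier_mat d d" and d: "0 < d"
  shows "q < sum_list lam * d \<Longrightarrow> q' < sum_list lam * d \<Longrightarrow> jordan_mat lam A $$ (q, q') = jent d lam A q q'"
proof (induct lam arbitrary: q q')
  case Nil thus ?case by simp
next
  case (Cons m ms)
  have dA: "dim_row A = d" using A by auto
  have qd: "q div d < m \<longleftrightarrow> q < m * d" "q' div d < m \<longleftrightarrow> q' < m * d"
    using d by (simp_all add: less_mult_imp_div_less div_less_iff_less_mult)
  show ?case
  proof (cases "q < m * d")
    case q: True
    show ?thesis
    proof (cases "q' < m * d")
      case True
      thus ?thesis using q Cons(2,3) qd dA unfolding jent_def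
        by (simp add: jordan_block_dims jordan_mat_dims jordan_block_mat_def Let_def distrib_right)
    next
      case False
      thus ?thesis using q Cons(2,3) qd dA unfolding jent_def
        by (simp add: jordan_block_dims jordan_mat_dims distrib_right)
    qed
  next
    case q: False
    note sq = divmod_shift[OF _ d, of m q]
    show ?thesis
    proof (cases "q' < m * d")
      case True
      thus ?thesis using q Cons(2,3) qd dA unfolding jent_def
        by (simp add: jordan_block_dims jordan_mat_dims distrib_right)
    next
      case False
      note sq' = divmod_shift[OF _ d, of m q']
      have lt: "q - m * d < sum_list ms * d" "q' - m * d < sum_list ms * d"
        using Cons(2,3) q False by (auto simp: distrib_right)
      have "jordan_mat (m # ms) A $$ (q, q') = jordan_mat ms A $$ (q - m * d, q' - m * d)"
        using q False Cons(2,3) dA by (simp add: jordan_block_dims jordan_mat_dims distrib_right)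
      also have "\<dots> = jent d ms A (q - m * d) (q' - m * d)" by (rule Cons(1)[OF lt])
      also have "\<dots> = jent d (m # ms) A q q'"
        using q False qd sq sq' unfolding jent_def by auto
      finally show ?thesis .
    qed
  qed
qed


lemma mat_mult_index: "A \<in> carrier_mat a b \<Longrightarrow> B \<in> carrier_mat b c \<Longrightarrow> i < a \<Longrightarrow> j < c \<Longrightarrow>
  (A * B) $$ (i, j) = (\<Sum>k<b. A $$ (i, k) * B $$ (k, j))"
  by (auto simp: scalar_prod_def atLeast0LessThan intro!: sum.cong)

lemma div_mod_lt: "q < n * d \<Longrightarrow> q div d < (n::nat)" "q < n * d \<Longrightarrow> q mod d < d"
  by (auto simp: less_mult_imp_div_less) (metis mod_less_divisor mult_zero_right not_less0 zero_less_iff_neq_zero)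

lemma coeff_dvd_zero: "Polynomial.monom 1 k dvd f \<Longrightarrow> a < k \<Longrightarrow> coeff f a = 0"
  using monom_1_dvd_iff' by blast

locale cpxl = cpx p \<phi> \<alpha> for p :: "'a::field poly" and \<phi> :: "'a \<Rightarrow> 'b::field" and \<alpha> +
  fixes lam :: "nat list"
  assumes pos: "\<forall>m\<in>set lam. 0 < m"
begin

abbreviation "nn \<equiv> sum_list lam"
abbreviation "dd \<equiv> degree p"
abbreviation "ss \<equiv> length lam"

definition Psi :: "'b poly mat \<Rightarrow> 'b mat" where
  "Psi M = mat nn nn (\<lambda>(u, u'). if snd (dec lam u') \<le> snd (dec lam u)
     then coeff (M $$ (fst (dec lam u), fst (dec lam u'))) (snd (dec lam u) - snd (dec lam u')) else 0)"

definition Exm :: "'b mat \<Rightarrow> 'a mat" where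
  "Exm Y = mat (nn * dd) (nn * dd) (\<lambda>(q, q'). Emat (Y $$ (q div dd, q' div dd)) $$ (q mod dd, q' mod dd))"

definition Phi :: "'b poly mat \<Rightarrow> 'a mat" where "Phi M = Exm (Psi M)"

lemma Psi_carrier[simp]: "Psi M \<in> carrier_mat nn nn" and Psi_dims[simp]: "dim_row (Psi M) = nn" "dim_col (Psi M) = nn"
  unfolding Psi_def by auto

lemma Exm_carrier[simp]: "Exm Y \<in> carrier_mat (nn * dd) (nn * dd)"
  and Exm_dims[simp]: "dim_row (Exm Y) = nn * dd" "dim_col (Exm Y) = nn * dd"
  unfolding Exm_def by auto

lemma Phi_carrier[simp]: "Phi M \<in> carrier_mat (nn * dd) (nn * dd)"
  and Phi_dims[simp]: "dim_row (Phi M) = nn * dd" "dim_col (Phi M) = nn * dd"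
  unfolding Phi_def by auto

lemma Psi_index: "u < nn \<Longrightarrow> u' < nn \<Longrightarrow> Psi M $$ (u, u') = (if snd (dec lam u') \<le> snd (dec lam u)
     then coeff (M $$ (fst (dec lam u), fst (dec lam u'))) (snd (dec lam u) - snd (dec lam u')) else 0)"
  unfolding Psi_def by simp

lemma Exm_index: "q < nn * dd \<Longrightarrow> q' < nn * dd \<Longrightarrow>
   Exm Y $$ (q, q') = coord (q mod dd) (Y $$ (q div dd, q' div dd) * \<alpha> ^ (q' mod dd))"
  unfolding Exm_def using div_mod_lt[of _ nn dd] by simp

lemma Exm_mult: assumes Y: "Y \<in> carrier_mat nn nn" and Z: "Z \<in> carrier_mat nn nn"
  shows "Exm (Y * Z) = Exm Y * Exm Z"
proof (rule eq_matI)
  fix q q' assume "q < dim_row (Exm Y * Exm Z)" "q' < dim_col (Exm Y * Exm Z)"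
  hence q: "q < nn * dd" and q': "q' < nn * dd" by auto
  note dm = div_mod_lt[OF q] div_mod_lt[OF q']
  have "(Exm Y * Exm Z) $$ (q, q') = (\<Sum>w<nn * dd. Exm Y $$ (q, w) * Exm Z $$ (w, q'))"
    using q q' by (intro mat_mult_index) auto
  also have "\<dots> = (\<Sum>v<nn. \<Sum>s<dd. Exm Y $$ (q, v * dd + s) * Exm Z $$ (v * dd + s, q'))"
    by (rule sum_lessThan_mult)
  also have "\<dots> = (\<Sum>v<nn. (Emat (Y $$ (q div dd, v)) * Emat (Z $$ (v, q' div dd))) $$ (q mod dd, q' mod dd))"
  proof (rule sum.cong[OF refl])
    fix v assume v: "v \<in> {..<nn}"
    have "(Emat (Y $$ (q div dd, v)) * Emat (Z $$ (v, q' div dd))) $$ (q mod dd, q' mod dd)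
      = (\<Sum>s<dd. Emat (Y $$ (q div dd, v)) $$ (q mod dd, s) * Emat (Z $$ (v, q' div dd)) $$ (s, q' mod dd))"
      using dm by (intro mat_mult_index) auto
    also have "\<dots> = (\<Sum>s<dd. Exm Y $$ (q, v * dd + s) * Exm Z $$ (v * dd + s, q'))"
    proof (rule sum.cong[OF refl])
      fix s assume s: "s \<in> {..<dd}"
      have vs: "v * dd + s < nn * dd" using v s
        by (metis lessThan_iff add_lessD1 add_mult_distrib mult_Suc nat_add_left_cancel_less
             less_eq_Suc_le mult_le_mono1 order_less_le_trans add.commute)
      have dv: "(v * dd + s) div dd = v" "(v * dd + s) mod dd = s" using s by auto
      show "Emat (Y $$ (q div dd, v)) $$ (q mod dd, s) * Emat (Z $$ (v, q' div dd)) $$ (s, q' mod dd)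
         = Exm Y $$ (q, v * dd + s) * Exm Z $$ (v * dd + s, q')"
        using q q' vs s dm dv by (simp add: Exm_index)
    qed
    finally show "(\<Sum>s<dd. Exm Y $$ (q, v * dd + s) * Exm Z $$ (v * dd + s, q')) =
       (Emat (Y $$ (q div dd, v)) * Emat (Z $$ (v, q' div dd))) $$ (q mod dd, q' mod dd)" by simp
  qed
  also have "\<dots> = (\<Sum>v<nn. coord (q mod dd) (Y $$ (q div dd, v) * Z $$ (v, q' div dd) * \<alpha> ^ (q' mod dd)))"
    using dm by (simp add: Emat_mult[symmetric])
  also have "\<dots> = coord (q mod dd) ((\<Sum>v<nn. Y $$ (q div dd, v) * Z $$ (v, q' div dd)) * \<alpha> ^ (q' mod dd))"
    by (simp add: coord_sum sum_distrib_right)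
  also have "\<dots> = Exm (Y * Z) $$ (q, q')"
  proof -
    have "(Y * Z) $$ (q div dd, q' div dd) = (\<Sum>v<nn. Y $$ (q div dd, v) * Z $$ (v, q' div dd))"
      by (rule mat_mult_index[OF Y Z]) (use dm in auto)
    thus ?thesis using q q' Y Z by (simp add: Exm_index)
  qed
  finally show "Exm (Y * Z) $$ (q, q') = (Exm Y * Exm Z) $$ (q, q')" by simp
qed auto

lemma Exm_add: assumes Y: "Y \<in> carrier_mat nn nn" and Z: "Z \<in> carrier_mat nn nn"
  shows "Exm (Y + Z) = Exm Y + Exm Z"
  by (rule eq_matI) (use Y Z div_mod_lt[of _ nn dd] in \<open>auto simp: Exm_index distrib_right\<close>)

lemma Exm_smult_one: "Exm (\<phi> c \<cdot>\<^sub>m 1\<^sub>m nn) = c \<cdot>\<^sub>m 1\<^sub>m (nn * dd)"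
proof (rule eq_matI)
  fix q q' assume "q < dim_row (c \<cdot>\<^sub>m 1\<^sub>m (nn * dd))" "q' < dim_col (c \<cdot>\<^sub>m 1\<^sub>m (nn * dd))"
  hence q: "q < nn * dd" and q': "q' < nn * dd" by auto
  note dm = div_mod_lt[OF q] div_mod_lt[OF q']
  have "q = q' \<longleftrightarrow> q div dd = q' div dd \<and> q mod dd = q' mod dd"
    by (metis div_mult_mod_eq)
  thus "Exm (\<phi> c \<cdot>\<^sub>m 1\<^sub>m nn) $$ (q, q') = (c \<cdot>\<^sub>m 1\<^sub>m (nn * dd)) $$ (q, q')"
    using q q' dm by (auto simp: Exm_index coord_pow)
qed auto

lemma one_smult_mat': "(1::'c::semiring_1) \<cdot>\<^sub>m 1\<^sub>m k = 1\<^sub>m k"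
  by (rule eq_matI) auto

lemma Exm_one: "Exm (1\<^sub>m nn) = 1\<^sub>m (nn * dd)"
  using Exm_smult_one[of 1] by (simp add: one_smult_mat')

lemma Exm_zero: assumes Y: "Y \<in> carrier_mat nn nn" and "Exm Y = 0\<^sub>m (nn * dd) (nn * dd)"
  shows "Y = 0\<^sub>m nn nn"
proof (rule eq_matI)
  fix u u' assume "u < dim_row (0\<^sub>m nn nn :: 'b mat)" "u' < dim_col (0\<^sub>m nn nn :: 'b mat)"
  hence u: "u < nn" and u': "u' < nn" by auto
  show "Y $$ (u, u') = 0\<^sub>m nn nn $$ (u, u')"
  proof -
    have "coord r (Y $$ (u, u')) = coord r 0" if r: "r < dd" for r
    proof -
      have lt: "u * dd + r < nn * dd" "u' * dd < nn * dd" using u u' r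
        by (metis add_lessD1 add_mult_distrib mult_Suc nat_add_left_cancel_less less_eq_Suc_le
             mult_le_mono1 order_less_le_trans add.commute,
            metis deg_pos mult_less_mono1 ) 
      have "Exm Y $$ (u * dd + r, u' * dd) = 0" using assms(2) lt by simp
      thus ?thesis using lt r deg_pos by (simp add: Exm_index)
    qed
    hence "Y $$ (u, u') = 0" by (intro coord_eqI) simp
    thus ?thesis using u u' by simp
  qed
qed (use Y in auto)

end

lemma conv_trunc: fixes a b :: "'c::comm_ring_1 poly"
  assumes dv: "Polynomial.monom 1 (Li - Lk) dvd a" and lLi: "l < Li"
  shows "(if l' \<le> l then coeff (a * b) (l - l') else 0)
    = (\<Sum>m<Lk. if m \<le> l \<and> l' \<le> m then coeff a (l - m) * coeff b (m - l') else 0)"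
    (is "?L = sum ?G _")
proof (cases "l' \<le> l")
  case True
  have "coeff (a * b) (l - l') = (\<Sum>x\<le>l - l'. coeff a x * coeff b (l - l' - x))"
    by (rule coeff_mult)
  also have "\<dots> = (\<Sum>m\<in>{l'..l}. coeff a (l - m) * coeff b (m - l'))"
    by (rule sum.reindex_bij_witness[where i = "\<lambda>m. l - m" and j = "\<lambda>x. l - x"])
       (use True in \<open>auto simp: add.commute\<close>)
  also have "\<dots> = sum ?G {l'..l}" by (rule sum.cong) auto
  also have "\<dots> = sum ?G {..l}"
    by (rule sum.mono_neutral_left) auto
  also have "\<dots> = sum ?G ({..l} \<inter> {..<Lk})"
  proof (rule sum.mono_neutral_right)
    show "\<forall>m\<in>{..l} - {..l} \<inter> {..<Lk}. ?G m = 0"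
    proof
      fix m assume m: "m \<in> {..l} - {..l} \<inter> {..<Lk}"
      hence "l - m < Li - Lk" using lLi by auto
      hence "coeff a (l - m) = 0" using dv coeff_dvd_zero by blast
      thus "?G m = 0" by simp
    qed
  qed auto
  also have "\<dots> = sum ?G {..<Lk}"
    by (rule sum.mono_neutral_left) auto
  finally show ?thesis using True by simp
next
  case False
  hence "\<And>m. \<not> (m \<le> l \<and> l' \<le> m)" by auto
  hence "sum ?G {..<Lk} = 0" by (intro sum.neutral) auto
  thus ?thesis using False by simp
qed

context cpxl begin

lemma part_alg_carrierD: assumes "M \<in> part_alg_carrier lam"
  shows "M \<in> carrier_mat ss ss" "i < ss \<Longrightarrow> j < ss \<Longrightarrow> Polynomial.monom 1 (lam ! i - lam ! j) dvd M $$ (i, j)"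
  using assms unfolding part_alg_carrier_def by auto

lemma dec_bounds: assumes "u < nn"
  shows "fst (dec lam u) < ss" "snd (dec lam u) < lam ! fst (dec lam u)"
  using dec_fst[OF assms] dec_snd[OF assms] by auto

lemma Psi_mult: assumes M: "M \<in> part_alg_carrier lam" and M': "M' \<in> part_alg_carrier lam"
  shows "Psi (M * M') = Psi M * Psi M'"
proof (rule eq_matI)
  fix u u' assume "u < dim_row (Psi M * Psi M')" "u' < dim_col (Psi M * Psi M')"
  hence u: "u < nn" and u': "u' < nn" by auto
  define i where "i = fst (dec lam u)"
  define l where "l = snd (dec lam u)"
  define j where "j = fst (dec lam u')"
  define l' where "l' = snd (dec lam u')"
  have i: "i < ss" "l < lam ! i" using dec_bounds[OF u] unfolding i_def l_def by auto
  have j: "j < ss" "l' < lam ! j" using dec_bounds[OF u'] unfolding j_def l'_def by auto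
  have Mc: "M \<in> carrier_mat ss ss" "M' \<in> carrier_mat ss ss" using M M' part_alg_carrierD by auto
  define G where "G k m = (if m \<le> l \<and> l' \<le> m then coeff (M $$ (i, k)) (l - m) * coeff (M' $$ (k, j)) (m - l') else 0)" for k m
  have "(Psi M * Psi M') $$ (u, u') = (\<Sum>w<nn. Psi M $$ (u, w) * Psi M' $$ (w, u'))"
    using u u' by (intro mat_mult_index) auto
  also have "\<dots> = (\<Sum>k<ss. \<Sum>m<lam ! k. Psi M $$ (u, enc lam k m) * Psi M' $$ (enc lam k m, u'))"
    by (rule sum_dec)
  also have "\<dots> = (\<Sum>k<ss. \<Sum>m<lam ! k. G k m)"
  proof (intro sum.cong refl)
    fix k m assume k: "k \<in> {..<ss}" and m: "m \<in> {..<lam ! k}"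
    have e: "enc lam k m < nn" "dec lam (enc lam k m) = (k, m)" using enc_less dec_enc k m by auto
    show "Psi M $$ (u, enc lam k m) * Psi M' $$ (enc lam k m, u') = G k m"
      using e u u' unfolding G_def by (simp add: Psi_index i_def l_def j_def l'_def)
  qed
  also have "\<dots> = (\<Sum>k<ss. if l' \<le> l then coeff (M $$ (i, k) * M' $$ (k, j)) (l - l') else 0)"
  proof (intro sum.cong refl)
    fix k assume k: "k \<in> {..<ss}"
    show "(\<Sum>m<lam ! k. G k m) = (if l' \<le> l then coeff (M $$ (i, k) * M' $$ (k, j)) (l - l') else 0)"
      unfolding G_def
      by (rule conv_trunc[symmetric]) (use part_alg_carrierD(2)[OF M i(1)] k i in auto)
  qed
  also have "\<dots> = Psi (M * M') $$ (u, u')"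
  proof -
    have "(M * M') $$ (i, j) = (\<Sum>k<ss. M $$ (i, k) * M' $$ (k, j))"
      by (rule mat_mult_index[OF Mc]) (use i j in auto)
    thus ?thesis using u u' by (simp add: Psi_index i_def l_def j_def l'_def coeff_sum)
  qed
  finally show "Psi (M * M') $$ (u, u') = (Psi M * Psi M') $$ (u, u')" by simp
qed auto

lemma Psi_add: assumes M: "M \<in> carrier_mat ss ss" and M': "M' \<in> carrier_mat ss ss"
  shows "Psi (M + M') = Psi M + Psi M'"
  by (rule eq_matI) (use M M' dec_bounds in \<open>auto simp: Psi_index\<close>)

lemma Psi_scal: "u < nn \<Longrightarrow> u' < nn \<Longrightarrow> Psi (z \<cdot>\<^sub>m 1\<^sub>m ss) $$ (u, u') =
  (if fst (dec lam u) = fst (dec lam u') \<and> snd (dec lam u') \<le> snd (dec lam u)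
   then coeff z (snd (dec lam u) - snd (dec lam u')) else 0)"
  using dec_bounds[of u] dec_bounds[of u'] by (auto simp: Psi_index)

lemma Psi_const: "Psi ([:c:] \<cdot>\<^sub>m 1\<^sub>m ss) = c \<cdot>\<^sub>m 1\<^sub>m nn"
proof (rule eq_matI)
  fix u u' assume "u < dim_row (c \<cdot>\<^sub>m 1\<^sub>m nn)" "u' < dim_col (c \<cdot>\<^sub>m 1\<^sub>m nn)"
  hence u: "u < nn" and u': "u' < nn" by auto
  have "dec lam u = dec lam u' \<longleftrightarrow> u = u'" by (rule dec_eq_iff) (use u u' in auto)
  hence "(fst (dec lam u) = fst (dec lam u') \<and> snd (dec lam u) = snd (dec lam u')) \<longleftrightarrow> u = u'"
    by (simp add: prod_eq_iff)
  thus "Psi ([:c:] \<cdot>\<^sub>m 1\<^sub>m ss) $$ (u, u') = (c \<cdot>\<^sub>m 1\<^sub>m nn) $$ (u, u')"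
    using u u' by (auto simp: Psi_scal coeff_pCons split: nat.splits)
qed auto

lemma Psi_one: "Psi (1\<^sub>m ss) = 1\<^sub>m nn"
  using Psi_const[of 1] by (simp add: one_smult_mat' one_pCons[symmetric])

lemma dec_snd_le: "u < nn \<Longrightarrow> snd (dec lam u) \<le> u"
  using enc_dec[of u lam] unfolding enc_def by linarith

lemma Psi_scal_cong: assumes "Polynomial.monom 1 nn dvd (z - w)"
  shows "Psi (z \<cdot>\<^sub>m 1\<^sub>m ss) = Psi (w \<cdot>\<^sub>m 1\<^sub>m ss)"
proof (rule eq_matI)
  fix u u' assume "u < dim_row (Psi (w \<cdot>\<^sub>m 1\<^sub>m ss))" "u' < dim_col (Psi (w \<cdot>\<^sub>m 1\<^sub>m ss))"
  hence u: "u < nn" and u': "u' < nn" by auto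
  have "coeff z k = coeff w k" if "k < nn" for k
    using coeff_dvd_zero[OF assms that] by simp
  moreover have "snd (dec lam u) - snd (dec lam u') < nn" using dec_snd_le[OF u] u by linarith
  ultimately show "Psi (z \<cdot>\<^sub>m 1\<^sub>m ss) $$ (u, u') = Psi (w \<cdot>\<^sub>m 1\<^sub>m ss) $$ (u, u')"
    using u u' by (simp add: Psi_scal)
qed auto

lemma Psi_zero_iff: assumes M: "M \<in> carrier_mat ss ss"
  shows "Psi M = 0\<^sub>m nn nn \<longleftrightarrow> (\<forall>i<ss. \<forall>j<ss. Polynomial.monom 1 (lam ! i) dvd M $$ (i, j))"
proof
  assume Z: "Psi M = 0\<^sub>m nn nn"
  show "\<forall>i<ss. \<forall>j<ss. Polynomial.monom 1 (lam ! i) dvd M $$ (i, j)"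
  proof (intro allI impI)
    fix i j assume i: "i < ss" and j: "j < ss"
    have j0: "0 < lam ! j" using pos j by auto
    show "Polynomial.monom 1 (lam ! i) dvd M $$ (i, j)"
      unfolding monom_1_dvd_iff'
    proof (intro allI impI)
      fix a assume a: "a < lam ! i"
      have e: "enc lam i a < nn" "dec lam (enc lam i a) = (i, a)"
              "enc lam j 0 < nn" "dec lam (enc lam j 0) = (j, 0)"
        using enc_less dec_enc i j a j0 by auto
      have "Psi M $$ (enc lam i a, enc lam j 0) = 0" using Z e by simp
      thus "coeff (M $$ (i, j)) a = 0" using e by (simp add: Psi_index)
    qed
  qed
next
  assume D: "\<forall>i<ss. \<forall>j<ss. Polynomial.monom 1 (lam ! i) dvd M $$ (i, j)"
  show "Psi M = 0\<^sub>m nn nn"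
  proof (rule eq_matI)
    fix u u' assume "u < dim_row (0\<^sub>m nn nn :: 'b mat)" "u' < dim_col (0\<^sub>m nn nn :: 'b mat)"
    hence u: "u < nn" and u': "u' < nn" by auto
    note b = dec_bounds[OF u] dec_bounds[OF u']
    have "snd (dec lam u) - snd (dec lam u') < lam ! fst (dec lam u)" using b by linarith
    hence "coeff (M $$ (fst (dec lam u), fst (dec lam u'))) (snd (dec lam u) - snd (dec lam u')) = 0"
      using D b coeff_dvd_zero by blast
    thus "Psi M $$ (u, u') = 0\<^sub>m nn nn $$ (u, u')" using u u' by (simp add: Psi_index)
  qed auto
qed

end

context cpxl begin

abbreviation "Jm \<equiv> jordan_mat lam (companion_mat p)"
abbreviation scal :: "'b poly \<Rightarrow> 'b poly mat" where "scal z \<equiv> z \<cdot>\<^sub>m 1\<^sub>m ss"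

lemma scal_carrier: "scal z \<in> part_alg_carrier lam"
  unfolding part_alg_carrier_def by auto

lemma scal_comm: assumes M: "M \<in> carrier_mat ss ss" shows "M * scal z = scal z * M"
  using mult_smult_distrib[OF M, of "1\<^sub>m ss" ss z] mult_smult_assoc_mat[of "1\<^sub>m ss" ss ss M ss z] M
  by simp

lemma smult_smult_mat': "(a::'c::semigroup_mult) \<cdot>\<^sub>m (b \<cdot>\<^sub>m A) = (a * b) \<cdot>\<^sub>m A"
  by (rule eq_matI) (auto simp: mult.assoc)

lemma scal_add: "scal (z + w) = scal z + scal w"
  by (rule add_smult_distrib_right_mat) auto

lemma scal_mult: "scal (z * w) = scal z * scal w"
  using mult_smult_assoc_mat[of "1\<^sub>m ss" ss ss "scal w" ss z] by (simp add: smult_smult_mat')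

lemma part_alg_carrier_carrier: "M \<in> part_alg_carrier lam \<Longrightarrow> M \<in> carrier_mat ss ss"
  unfolding part_alg_carrier_def by auto

lemma Phi_mult: "M \<in> part_alg_carrier lam \<Longrightarrow> M' \<in> part_alg_carrier lam \<Longrightarrow> Phi (M * M') = Phi M * Phi M'"
  unfolding Phi_def by (simp add: Psi_mult Exm_mult)

lemma Phi_add: "M \<in> carrier_mat ss ss \<Longrightarrow> M' \<in> carrier_mat ss ss \<Longrightarrow> Phi (M + M') = Phi M + Phi M'"
  unfolding Phi_def by (simp add: Psi_add Exm_add)

lemma Phi_one: "Phi (1\<^sub>m ss) = 1\<^sub>m (nn * dd)"
  unfolding Phi_def by (simp add: Psi_one Exm_one)

lemma Phi_const: "Phi (scal [:\<phi> c:]) = c \<cdot>\<^sub>m 1\<^sub>m (nn * dd)"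
  unfolding Phi_def by (simp add: Psi_const Exm_smult_one)

lemma Exm_zero_mat: "Exm (0\<^sub>m nn nn) = 0\<^sub>m (nn * dd) (nn * dd)"
  by (rule eq_matI) (use div_mod_lt[of _ nn dd] in \<open>auto simp: Exm_index\<close>)

lemma Phi_zero_iff: assumes M: "M \<in> carrier_mat ss ss"
  shows "Phi M = 0\<^sub>m (nn * dd) (nn * dd) \<longleftrightarrow> (\<forall>i<ss. \<forall>j<ss. Polynomial.monom 1 (lam ! i) dvd M $$ (i, j))"
  unfolding Psi_zero_iff[OF M, symmetric] Phi_def
  using Exm_zero[of "Psi M"] Exm_zero_mat by auto

lemma companion_carrier: "companion_mat p \<in> carrier_mat dd dd"
  unfolding companion_mat_def by auto

lemma Jm_dims: "dim_row Jm = nn * dd" "dim_col Jm = nn * dd"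
  using jordan_mat_dims[of lam "companion_mat p"] companion_carrier by auto

lemma Jm_eq: "Jm = Phi (scal [:\<alpha>, 1:])"
proof (rule eq_matI)
  fix q q' assume "q < dim_row (Phi (scal [:\<alpha>, 1:]))" "q' < dim_col (Phi (scal [:\<alpha>, 1:]))"
  hence q: "q < nn * dd" and q': "q' < nn * dd" by auto
  note dm = div_mod_lt[OF q] div_mod_lt[OF q']
  define i where "i = fst (dec lam (q div dd))"
  define l where "l = snd (dec lam (q div dd))"
  define j where "j = fst (dec lam (q' div dd))"
  define l' where "l' = snd (dec lam (q' div dd))"
  define r where "r = q mod dd"
  define r' where "r' = q' mod dd"
  have r: "r < dd" "r' < dd" using dm unfolding r_def r'_def by auto
  have "Jm $$ (q, q') = jent dd lam (companion_mat p) q q'"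
    by (rule jordan_mat_index[OF companion_carrier deg_pos q q'])
  also have "\<dots> = (if i = j then (if l = l' then companion_mat p $$ (r, r')
       else if l = Suc l' \<and> r = r' then 1 else 0) else 0)"
    unfolding jent_def i_def j_def l_def l'_def r_def r'_def by simp
  also have "\<dots> = coord r ((if i = j \<and> l' \<le> l then coeff [:\<alpha>, 1:] (l - l') else 0) * \<alpha> ^ r')"
  proof -
    have c: "companion_mat p $$ (r, r') = coord r (\<alpha> * \<alpha> ^ r')"
      using Emat_index[OF r, of \<alpha>] Emat_alpha by simp
    have "l = Suc l' \<Longrightarrow> coeff [:\<alpha>, 1:] (l - l') = 1" by simp
    moreover have "l' \<le> l \<Longrightarrow> l \<noteq> l' \<Longrightarrow> l \<noteq> Suc l' \<Longrightarrow> coeff [:\<alpha>, 1:] (l - l') = 0"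
      by (cases "l - l'") (auto simp: coeff_pCons split: nat.splits)
    ultimately show ?thesis using c r coord_pow[OF r(2) r(1)]
      by (cases "l = Suc l'"; cases "l = l'"; auto)
  qed
  also have "\<dots> = Phi (scal [:\<alpha>, 1:]) $$ (q, q')"
    unfolding Phi_def using q q' dm
    by (simp add: Exm_index Psi_scal i_def j_def l_def l'_def r_def r'_def)
  finally show "Jm $$ (q, q') = Phi (scal [:\<alpha>, 1:]) $$ (q, q')" .
qed (auto simp: Jm_dims)

end

lemma ring_mat_ainv: assumes "B \<in> carrier_mat k k"
  shows "\<ominus>\<^bsub>ring_mat TYPE('c::comm_ring_1) k b\<^esub> B = - B"
  by (rule abelian_group.minus_equality[OF ring.is_abelian_group[OF ring_mat]])
     (use assms in \<open>auto simp: ring_mat_simps\<close>)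

lemma monom_dvd_monom: "a \<le> b \<Longrightarrow> Polynomial.monom (1::'c::comm_ring_1) a dvd Polynomial.monom 1 b"
  unfolding monom_1_dvd_iff' by (simp add: coeff_monom)

context cpxl begin

lemma part_alg_mult_closed: fixes M M' :: "'b poly mat" assumes M: "M \<in> part_alg_carrier lam" and M': "M' \<in> part_alg_carrier lam"
  shows "M * M' \<in> part_alg_carrier lam"
proof -
  have Mc: "M \<in> carrier_mat ss ss" "M' \<in> carrier_mat ss ss" using M M' part_alg_carrierD by auto
  have "Polynomial.monom 1 (lam ! i - lam ! j) dvd (M * M') $$ (i, j)" if ij: "i < ss" "j < ss" for i j
  proof -
    have "(M * M') $$ (i, j) = (\<Sum>k<ss. M $$ (i, k) * M' $$ (k, j))"
      by (rule mat_mult_index[OF Mc]) (use ij in auto)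
    also have "Polynomial.monom 1 (lam ! i - lam ! j) dvd \<dots>"
    proof (rule dvd_sum)
      fix k assume k: "k \<in> {..<ss}"
      have "Polynomial.monom (1::'b) (lam ! i - lam ! j) dvd Polynomial.monom 1 ((lam ! i - lam ! k) + (lam ! k - lam ! j))"
        by (rule monom_dvd_monom) linarith
      also have "\<dots> = Polynomial.monom 1 (lam ! i - lam ! k) * Polynomial.monom 1 (lam ! k - lam ! j)"
        by (simp add: mult_monom)
      also have "\<dots> dvd M $$ (i, k) * M' $$ (k, j)"
        by (rule mult_dvd_mono; rule part_alg_carrierD(2)) (use M M' ij k in auto)
      finally show "Polynomial.monom 1 (lam ! i - lam ! j) dvd M $$ (i, k) * M' $$ (k, j)" .
    qed
    finally show ?thesis .
  qed
  thus ?thesis using Mc unfolding part_alg_carrier_def by auto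
qed

lemma part_alg_eq: "(part_alg lam :: 'b poly mat ring) = (ring_mat TYPE('b poly) ss ())\<lparr>carrier := part_alg_carrier lam\<rparr>"
  unfolding part_alg_def ring_mat_def by simp

lemma part_alg_ring: "ring (part_alg lam :: 'b poly mat ring)"
  unfolding part_alg_eq
proof (rule ring.subring_is_ring[OF ring_mat], rule ring.subringI[OF ring_mat])
  show "part_alg_carrier lam \<subseteq> carrier (ring_mat TYPE('b poly) ss ())"
    by (auto simp: ring_mat_simps part_alg_carrier_def)
  show "\<one>\<^bsub>ring_mat TYPE('b poly) ss ()\<^esub> \<in> part_alg_carrier lam"
    by (auto simp: ring_mat_simps part_alg_carrier_def)
  fix h :: "'b poly mat"
  assume h: "h \<in> part_alg_carrier lam"
  thus "\<ominus>\<^bsub>ring_mat TYPE('b poly) ss ()\<^esub> h \<in> part_alg_carrier lam"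
    by (subst ring_mat_ainv) (auto simp: part_alg_carrier_def)
next
  fix h1 h2 :: "'b poly mat" assume h: "h1 \<in> part_alg_carrier lam" "h2 \<in> part_alg_carrier lam"
  thus "h1 \<otimes>\<^bsub>ring_mat TYPE('b poly) ss ()\<^esub> h2 \<in> part_alg_carrier lam"
    using part_alg_mult_closed by (simp add: ring_mat_simps)
  show "h1 \<oplus>\<^bsub>ring_mat TYPE('b poly) ss ()\<^esub> h2 \<in> part_alg_carrier lam"
    using h by (auto simp: ring_mat_simps part_alg_carrier_def)
qed

abbreviation "cent_carrier \<equiv> {B \<in> carrier_mat (nn * dd) (nn * dd). B * Jm = Jm * B}"

lemma Jm_carrier: "Jm \<in> carrier_mat (nn * dd) (nn * dd)" using Jm_dims by auto

lemma centralizer_eq: "centralizer_ring Jm = (ring_mat TYPE('a) (nn * dd) ())\<lparr>carrier := cent_carrier\<rparr>"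
  unfolding centralizer_ring_def ring_mat_def Jm_dims by simp

lemma centralizer_carrier: "carrier (centralizer_ring Jm) = cent_carrier"
  unfolding centralizer_eq by simp

lemma centralizer_ring: "ring (centralizer_ring Jm)"
  unfolding centralizer_eq
proof (rule ring.subring_is_ring[OF ring_mat], rule ring.subringI[OF ring_mat])
  note J = Jm_carrier
  show "cent_carrier \<subseteq> carrier (ring_mat TYPE('a) (nn * dd) ())"
    by (auto simp: ring_mat_simps)
  show "\<one>\<^bsub>ring_mat TYPE('a) (nn * dd) ()\<^esub> \<in> cent_carrier"
    using J by (auto simp: ring_mat_simps)
  fix h assume h: "h \<in> cent_carrier"
  thus "\<ominus>\<^bsub>ring_mat TYPE('a) (nn * dd) ()\<^esub> h \<in> cent_carrier"
    using J by (subst ring_mat_ainv) auto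
next
  note J = Jm_carrier
  fix h1 h2 assume h: "h1 \<in> cent_carrier" "h2 \<in> cent_carrier"
  have "h1 * h2 * Jm = h1 * (h2 * Jm)" by (rule assoc_mult_mat) (use h J in auto)
  also have "\<dots> = h1 * (Jm * h2)" using h by (simp only: mem_Collect_eq)
  also have "\<dots> = (h1 * Jm) * h2" by (rule assoc_mult_mat[symmetric]) (use h J in auto)
  also have "\<dots> = (Jm * h1) * h2" using h by (simp only: mem_Collect_eq)
  also have "\<dots> = Jm * (h1 * h2)" by (rule assoc_mult_mat) (use h J in auto)
  finally have F: "h1 * h2 * Jm = Jm * (h1 * h2)" .
  have c: "h1 * h2 \<in> carrier_mat (nn * dd) (nn * dd)" using h by auto
  show "h1 \<otimes>\<^bsub>ring_mat TYPE('a) (nn * dd) ()\<^esub> h2 \<in> cent_carrier"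
    unfolding ring_mat_simps using c F by blast
  show "h1 \<oplus>\<^bsub>ring_mat TYPE('a) (nn * dd) ()\<^esub> h2 \<in> cent_carrier"
    using h J by (auto simp: ring_mat_simps add_mult_distrib_mat mult_add_distrib_mat)
qed

lemma Phi_comm_J: assumes M: "M \<in> part_alg_carrier lam" shows "Phi M * Jm = Jm * Phi M"
proof -
  have "Phi M * Jm = Phi (M * scal [:\<alpha>, 1:])" using Phi_mult[OF M scal_carrier] Jm_eq by simp
  also have "\<dots> = Phi (scal [:\<alpha>, 1:] * M)" using scal_comm part_alg_carrier_carrier[OF M] by simp
  also have "\<dots> = Jm * Phi M" using Phi_mult[OF scal_carrier M] Jm_eq by simp
  finally show ?thesis .
qed

lemma Phi_hom: "Phi \<in> ring_hom (part_alg lam) (centralizer_ring Jm)"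
proof (rule ring_hom_memI)
  fix x :: "'b poly mat" assume "x \<in> carrier (part_alg lam)"
  hence x: "x \<in> part_alg_carrier lam" unfolding part_alg_def by simp
  show "Phi x \<in> carrier (centralizer_ring Jm)"
    unfolding centralizer_carrier using Phi_comm_J[OF x] by simp
next
  fix x y :: "'b poly mat" assume "x \<in> carrier (part_alg lam)" "y \<in> carrier (part_alg lam)"
  hence x: "x \<in> part_alg_carrier lam" and y: "y \<in> part_alg_carrier lam" unfolding part_alg_def by auto
  show "Phi (x \<otimes>\<^bsub>part_alg lam\<^esub> y) = Phi x \<otimes>\<^bsub>centralizer_ring Jm\<^esub> Phi y"
    using Phi_mult[OF x y] unfolding part_alg_def centralizer_ring_def by simp
  show "Phi (x \<oplus>\<^bsub>part_alg lam\<^esub> y) = Phi x \<oplus>\<^bsub>centralizer_ring Jm\<^esub> Phi y"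
    using Phi_add[OF part_alg_carrier_carrier[OF x] part_alg_carrier_carrier[OF y]]
    unfolding part_alg_def centralizer_ring_def by simp
next
  show "Phi \<one>\<^bsub>part_alg lam\<^esub> = \<one>\<^bsub>centralizer_ring Jm\<^esub>"
    using Phi_one unfolding part_alg_def centralizer_ring_def by (simp add: Jm_dims)
qed

lemma Phi_hom_ring: "ring_hom_ring (part_alg lam) (centralizer_ring Jm) Phi"
  by (rule ring_hom_ringI2[OF part_alg_ring centralizer_ring Phi_hom])

lemma Phi_kernel: "a_kernel (part_alg lam) (centralizer_ring Jm) Phi = (part_ideal lam :: 'b poly mat set)"
proof -
  have "a_kernel (part_alg lam) (centralizer_ring Jm) Phi =
     {M \<in> part_alg_carrier lam. Phi M = 0\<^sub>m (nn * dd) (nn * dd)}"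
    unfolding a_kernel_def' by (simp add: part_alg_def centralizer_ring_def Jm_dims)
  also have "\<dots> = part_ideal lam"
    unfolding part_ideal_def using Phi_zero_iff part_alg_carrier_carrier by blast
  finally show ?thesis .
qed

end

lemma taylor2: fixes Q :: "'c::idom poly"
  shows "\<exists>h. poly Q (a + e) = poly Q a + e * poly (pderiv Q) a + e * e * h"
proof (induct Q)
  case 0 show ?case by simp
next
  case (pCons c Q)
  then obtain h where h: "poly Q (a + e) = poly Q a + e * poly (pderiv Q) a + e * e * h" by blast
  show ?case
  proof (intro exI)
    show "poly (pCons c Q) (a + e) = poly (pCons c Q) a + e * poly (pderiv (pCons c Q)) a
       + e * e * (a * h + poly (pderiv Q) a + e * h)"
      by (simp add: pderiv_pCons h algebra_simps)
  qed
qed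

lemma newton_alg: fixes A Bc e h1 k2 :: "'c::comm_ring_1"
  assumes "A * Bc = 1"
  shows "e - (e * A + e * e * h1) * (Bc + e * k2) = e * e * (- (A * k2 + h1 * Bc + e * h1 * k2))"
proof -
  have "e - (e * A + e * e * h1) * (Bc + e * k2) = e - e * (A * Bc) - e * e * (A * k2 + h1 * Bc + e * h1 * k2)"
    by (simp add: algebra_simps)
  thus ?thesis using assms by (simp add: algebra_simps)
qed

lemma monom_dvd_sq: assumes "Polynomial.monom (1::'c::comm_ring_1) (Suc k) dvd e"
  shows "Polynomial.monom 1 (Suc (Suc k)) dvd e * e * w"
proof -
  have "Polynomial.monom (1::'c) (Suc k) * Polynomial.monom 1 (Suc k) dvd e * e"
    by (rule mult_dvd_mono[OF assms assms])
  hence "Polynomial.monom (1::'c) (Suc k + Suc k) dvd e * e" by (simp add: mult_monom)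
  moreover have "Polynomial.monom (1::'c) (Suc (Suc k)) dvd Polynomial.monom 1 (Suc k + Suc k)"
    by (rule monom_dvd_monom) simp
  ultimately show ?thesis by (meson dvd_trans dvd_mult2)
qed

context cpxl begin

definition ev :: "'a poly \<Rightarrow> 'b poly \<Rightarrow> 'b poly" where
  "ev g z = poly (map_poly (\<lambda>c. [:\<phi> c:]) g) z"

lemma ev_pCons: "ev (pCons c g) z = [:\<phi> c:] + z * ev g z"
  unfolding ev_def by (subst Polynomial.map_poly_pCons) simp_all

lemma ev_0[simp]: "ev 0 z = 0" unfolding ev_def by simp

lemma ev_const_point: "ev g [:a:] = [:poly (map_poly \<phi> g) a:]"
proof (induct g)
  case (pCons c g)
  thus ?case unfolding ev_pCons by (subst Polynomial.map_poly_pCons) simp_all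
qed simp

interpretation psi: idom_hom "\<lambda>c. [:\<phi> c:]"
  by unfold_locales (auto simp: hom_distribs)

lemma ev_pderiv: "poly (pderiv (map_poly (\<lambda>c. [:\<phi> c:]) g)) z = ev (pderiv g) z"
  unfolding ev_def psi.map_poly_pderiv ..

lemma pe_pderiv_nz: "pe (pderiv p) \<noteq> 0"
proof
  assume z: "pe (pderiv p) = 0"
  have "pderiv p mod p = 0"
  proof (rule pe_inj0)
    show "pe (pderiv p mod p) = 0" using z pe_mod by simp
    show "degree (pderiv p mod p) < degree p"
    proof (cases "pderiv p mod p = 0")
      case False
      have "p \<noteq> 0" using deg_pos by auto
      thus ?thesis using degree_mod_less'[of p "pderiv p"] False by auto
    qed (use deg_pos in simp)
  qed
  hence "p dvd pderiv p" by (simp add: dvd_eq_mod_eq_0)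
  hence "is_unit p" using coprime_common_divisor[OF sep[unfolded separable_poly_def] dvd_refl] by blast
  moreover have "\<not> is_unit p" using irr unfolding irreducible_def by blast
  ultimately show False by simp
qed

lemma bezout_b: "\<exists>b. pe b * pe (pderiv p) = 1"
proof -
  obtain b where bi: "inverse (pe (pderiv p)) = pe b" using gen unfolding pe_def by blast
  have "inverse (pe (pderiv p)) * pe (pderiv p) = 1" using pe_pderiv_nz by (rule left_inverse)
  thus ?thesis unfolding bi by blast
qed

definition R0 :: "'a mat \<Rightarrow> 'b poly set" where
  "R0 B = {z. Phi (scal z) * B = B * Phi (scal z)}"

context
  fixes B assumes B: "B \<in> carrier_mat (nn * dd) (nn * dd)" and BJ: "B * Jm = Jm * B"
begin

lemma R0_const: "[:\<phi> c:] \<in> R0 B"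
  unfolding R0_def using B mult_smult_assoc_mat[of "1\<^sub>m (nn * dd)" "nn * dd" "nn * dd" B "nn * dd" c]
    mult_smult_distrib[OF B, of "1\<^sub>m (nn * dd)" "nn * dd" c] by (simp add: Phi_const)

lemma R0_y0: "[:\<alpha>, 1:] \<in> R0 B"
  unfolding R0_def using BJ Jm_eq by simp

lemma R0_add: assumes "z \<in> R0 B" "w \<in> R0 B" shows "z + w \<in> R0 B"
proof -
  have e: "Phi (scal (z + w)) = Phi (scal z) + Phi (scal w)"
    by (simp add: scal_add Phi_add)
  have "(Phi (scal z) + Phi (scal w)) * B = Phi (scal z) * B + Phi (scal w) * B"
    using B by (intro add_mult_distrib_mat) auto
  also have "\<dots> = B * Phi (scal z) + B * Phi (scal w)" using assms unfolding R0_def by simp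
  also have "\<dots> = B * (Phi (scal z) + Phi (scal w))"
    using B by (intro mult_add_distrib_mat[symmetric]) auto
  finally have F: "(Phi (scal z) + Phi (scal w)) * B = B * (Phi (scal z) + Phi (scal w))" .
  show ?thesis unfolding R0_def mem_Collect_eq e using F .
qed

lemma R0_mult: assumes "z \<in> R0 B" "w \<in> R0 B" shows "z * w \<in> R0 B"
proof -
  let ?X = "Phi (scal z)" and ?Y = "Phi (scal w)"
  have e: "Phi (scal (z * w)) = ?X * ?Y" by (simp add: scal_mult Phi_mult scal_carrier)
  have c: "?X \<in> carrier_mat (nn * dd) (nn * dd)" "?Y \<in> carrier_mat (nn * dd) (nn * dd)" by auto
  have "?X * ?Y * B = ?X * (?Y * B)" by (rule assoc_mult_mat) (use c B in auto)
  also have "\<dots> = ?X * (B * ?Y)" using assms unfolding R0_def by simp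
  also have "\<dots> = (?X * B) * ?Y" by (rule assoc_mult_mat[symmetric]) (use c B in auto)
  also have "\<dots> = (B * ?X) * ?Y" using assms unfolding R0_def by simp
  also have "\<dots> = B * (?X * ?Y)" by (rule assoc_mult_mat) (use c B in auto)
  finally have F: "?X * ?Y * B = B * (?X * ?Y)" .
  show ?thesis unfolding R0_def mem_Collect_eq e using F .
qed

lemma R0_diff: assumes "z \<in> R0 B" "w \<in> R0 B" shows "z - w \<in> R0 B"
proof -
  have eq: "z - w = z + [:\<phi> (-1):] * w" by (simp add: hom_distribs)
  have "[:\<phi> (-1):] * w \<in> R0 B" by (rule R0_mult[OF R0_const assms(2)])
  hence "z + [:\<phi> (-1):] * w \<in> R0 B" by (rule R0_add[OF assms(1)])
  thus ?thesis unfolding eq .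
qed

lemma R0_ev: assumes "z \<in> R0 B" shows "ev g z \<in> R0 B"
proof (induct g)
  case 0 show ?case using R0_const[of 0] by simp
next
  case (pCons c g) thus ?case using R0_add R0_mult R0_const assms by (simp add: ev_pCons)
qed

lemma R0_cong: assumes "Polynomial.monom 1 nn dvd (z - w)" "w \<in> R0 B" shows "z \<in> R0 B"
  using assms Psi_scal_cong[OF assms(1)] unfolding R0_def Phi_def by simp

lemma hensel: "\<exists>z \<in> R0 B. Polynomial.monom 1 (Suc k) dvd (z - [:\<alpha>:])"
proof (induct k)
  case 0
  have "[:\<alpha>, 1:] - [:\<alpha>:] = Polynomial.monom 1 1" by (simp add: monom_Suc)
  thus ?case using R0_y0 by (intro bexI[of _ "[:\<alpha>, 1:]"]) auto
next
  case (Suc k)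
  then obtain z where z: "z \<in> R0 B" and dv: "Polynomial.monom 1 (Suc k) dvd (z - [:\<alpha>:])" by blast
  obtain b where b: "pe b * pe (pderiv p) = 1" using bezout_b by blast
  define e where "e = z - [:\<alpha>:]"
  have ze: "z = [:\<alpha>:] + e" unfolding e_def by simp
  define z' where "z' = z - ev p z * ev b z"
  have z': "z' \<in> R0 B" unfolding z'_def using z R0_ev R0_mult R0_diff by blast
  obtain h1 where h1: "poly (map_poly (\<lambda>c. [:\<phi> c:]) p) ([:\<alpha>:] + e) =
     poly (map_poly (\<lambda>c. [:\<phi> c:]) p) [:\<alpha>:] + e * poly (pderiv (map_poly (\<lambda>c. [:\<phi> c:]) p)) [:\<alpha>:] + e * e * h1"
    using taylor2 by blast
  obtain h2 where h2: "poly (map_poly (\<lambda>c. [:\<phi> c:]) b) ([:\<alpha>:] + e) =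
     poly (map_poly (\<lambda>c. [:\<phi> c:]) b) [:\<alpha>:] + e * poly (pderiv (map_poly (\<lambda>c. [:\<phi> c:]) b)) [:\<alpha>:] + e * e * h2"
    using taylor2 by blast
  have P0: "poly (map_poly (\<lambda>c. [:\<phi> c:]) p) [:\<alpha>:] = 0"
    using ev_const_point[of p \<alpha>] by (simp add: ev_def pe_def[symmetric])
  have P1: "poly (pderiv (map_poly (\<lambda>c. [:\<phi> c:]) p)) [:\<alpha>:] = [:pe (pderiv p):]"
    using ev_const_point[of "pderiv p" \<alpha>] by (simp add: ev_pderiv pe_def[symmetric])
  have B0: "poly (map_poly (\<lambda>c. [:\<phi> c:]) b) [:\<alpha>:] = [:pe b:]"
    using ev_const_point[of b \<alpha>] by (simp add: ev_def pe_def[symmetric])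
  have B1: "poly (pderiv (map_poly (\<lambda>c. [:\<phi> c:]) b)) [:\<alpha>:] = ev (pderiv b) [:\<alpha>:]"
    by (rule ev_pderiv)
  have "ev p z = poly (map_poly (\<lambda>c. [:\<phi> c:]) p) ([:\<alpha>:] + e)" by (simp only: ev_def ze)
  hence evp: "ev p z = e * [:pe (pderiv p):] + e * e * h1" using h1 P0 P1 by simp
  have "ev b z = poly (map_poly (\<lambda>c. [:\<phi> c:]) b) ([:\<alpha>:] + e)" by (simp only: ev_def ze)
  hence evb: "ev b z = [:pe b:] + e * (ev (pderiv b) [:\<alpha>:] + e * h2)" using h2 B0 B1
    by (simp add: distrib_left mult.assoc)
  have AB: "[:pe (pderiv p):] * [:pe b:] = 1" using b by (simp add: mult.commute one_pCons)
  have "z' - [:\<alpha>:] = e - ev p z * ev b z" by (simp add: z'_def e_def algebra_simps)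
  also have "\<dots> = e - (e * [:pe (pderiv p):] + e * e * h1) * ([:pe b:] + e * (ev (pderiv b) [:\<alpha>:] + e * h2))"
    unfolding evp evb ..
  also have "\<dots> = e * e * (- ([:pe (pderiv p):] * (ev (pderiv b) [:\<alpha>:] + e * h2) + h1 * [:pe b:]
       + e * h1 * (ev (pderiv b) [:\<alpha>:] + e * h2)))"
    by (rule newton_alg[OF AB])
  finally have "Polynomial.monom 1 (Suc (Suc k)) dvd (z' - [:\<alpha>:])"
    using monom_dvd_sq[OF dv[folded e_def]] by simp
  thus ?case using z' by blast
qed

lemma R0_alpha: "[:\<alpha>:] \<in> R0 B"
proof -
  obtain z where z: "z \<in> R0 B" and dv: "Polynomial.monom 1 (Suc nn) dvd (z - [:\<alpha>:])"
    using hensel by blast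
  have "Polynomial.monom (1::'b) nn dvd Polynomial.monom 1 (Suc nn)" by (rule monom_dvd_monom) simp
  hence "Polynomial.monom 1 nn dvd (z - [:\<alpha>:])" using dv by (rule dvd_trans)
  hence "Polynomial.monom 1 nn dvd - (z - [:\<alpha>:])" by (simp only: dvd_minus_iff)
  hence "Polynomial.monom 1 nn dvd ([:\<alpha>:] - z)" by (simp only: minus_diff_eq)
  thus ?thesis using R0_cong z by blast
qed

lemma R0_x: "[:0, 1:] \<in> R0 B"
proof -
  have "[:0, 1:] = [:\<alpha>, 1:] - [:\<alpha>:]" by simp
  thus ?thesis using R0_diff[OF R0_y0 R0_alpha] by simp
qed

end
end

lemma mult_col_sel: fixes Z T :: "'c::comm_ring_1 mat"
  assumes Z: "Z \<in> carrier_mat k k" and T: "T \<in> carrier_mat k k" and a: "a < k" and c: "c < k" "c' < k"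
    and Tc: "\<forall>w<k. T $$ (w, c) = (if w = c' then 1 else 0)"
  shows "(Z * T) $$ (a, c) = Z $$ (a, c')"
proof -
  have "(Z * T) $$ (a, c) = (\<Sum>w<k. Z $$ (a, w) * T $$ (w, c))" by (rule mat_mult_index[OF Z T a c(1)])
  also have "\<dots> = (\<Sum>w<k. if w = c' then Z $$ (a, w) else 0)" by (rule sum.cong) (auto simp: Tc)
  also have "\<dots> = Z $$ (a, c')" using c by simp
  finally show ?thesis .
qed

lemma mult_col_zero: fixes Z T :: "'c::comm_ring_1 mat"
  assumes Z: "Z \<in> carrier_mat k k" and T: "T \<in> carrier_mat k k" and a: "a < k" and c: "c < k"
    and Tc: "\<forall>w<k. T $$ (w, c) = 0"
  shows "(Z * T) $$ (a, c) = 0"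
  using mat_mult_index[OF Z T a c] Tc by simp

lemma mult_row_sel: fixes Z T :: "'c::comm_ring_1 mat"
  assumes Z: "Z \<in> carrier_mat k k" and T: "T \<in> carrier_mat k k" and a: "a < k" and c: "c < k" and a': "a' < k"
    and Ta: "\<forall>w<k. T $$ (a, w) = (if P \<and> w = a' then 1 else 0)"
  shows "(T * Z) $$ (a, c) = (if P then Z $$ (a', c) else 0)"
proof -
  have "(T * Z) $$ (a, c) = (\<Sum>w<k. T $$ (a, w) * Z $$ (w, c))" by (rule mat_mult_index[OF T Z a c])
  also have "\<dots> = (\<Sum>w<k. if P \<and> w = a' then Z $$ (w, c) else 0)" by (rule sum.cong) (auto simp: Ta)
  also have "\<dots> = (if P then Z $$ (a', c) else 0)" using a' by (cases P) simp_all
  finally show ?thesis .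
qed

lemma col_transfer: fixes X Y T :: "'c::comm_ring_1 mat"
  assumes X: "X \<in> carrier_mat k k" and Y: "Y \<in> carrier_mat k k" and T: "T \<in> carrier_mat k k"
    and XT: "X * T = T * X" and YT: "Y * T = T * Y" and c: "c < k" "c' < k"
    and Tc: "\<forall>w<k. T $$ (w, c) = (if w = c' then 1 else 0)"
    and eq: "\<forall>a<k. X $$ (a, c) = Y $$ (a, c)"
  shows "\<forall>a<k. X $$ (a, c') = Y $$ (a, c')"
proof (intro allI impI)
  fix a assume a: "a < k"
  have "X $$ (a, c') = (X * T) $$ (a, c)" using mult_col_sel[OF X T a c Tc] by simp
  also have "\<dots> = (T * X) $$ (a, c)" using XT by simp
  also have "\<dots> = (\<Sum>w<k. T $$ (a, w) * X $$ (w, c))" by (rule mat_mult_index[OF T X a c(1)])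
  also have "\<dots> = (\<Sum>w<k. T $$ (a, w) * Y $$ (w, c))" using eq by (intro sum.cong) auto
  also have "\<dots> = (T * Y) $$ (a, c)" by (rule mat_mult_index[OF T Y a c(1), symmetric])
  also have "\<dots> = (Y * T) $$ (a, c)" using YT by simp
  also have "\<dots> = Y $$ (a, c')" using mult_col_sel[OF Y T a c Tc] by simp
  finally show "X $$ (a, c') = Y $$ (a, c')" .
qed

lemma coeff_x: "coeff [:0, 1:] k = (if k = 1 then 1 else 0)"
  by (cases k) (auto simp: coeff_pCons split: nat.splits)

lemma coeff_c: "coeff [:a:] k = (if k = 0 then a else 0)"
  by (cases k) auto

context cpxl begin

definition idx :: "nat \<Rightarrow> nat \<Rightarrow> nat \<Rightarrow> nat" where "idx i l r = enc lam i l * dd + r"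

lemma idx_lt: assumes "i < ss" "l < lam ! i" "r < dd" shows "idx i l r < nn * dd"
proof -
  have "enc lam i l < nn" using enc_less assms by blast
  hence "Suc (enc lam i l) * dd \<le> nn * dd" by (intro mult_le_mono1) simp
  thus ?thesis unfolding idx_def using assms(3) by simp
qed

lemma idx_div: "r < dd \<Longrightarrow> idx i l r div dd = enc lam i l" unfolding idx_def by simp
lemma idx_mod: "r < dd \<Longrightarrow> idx i l r mod dd = r" unfolding idx_def by simp

lemma idx_cases: assumes "q < nn * dd"
  obtains i l r where "i < ss" "l < lam ! i" "r < dd" "q = idx i l r"
proof -
  have u: "q div dd < nn" and r: "q mod dd < dd" using div_mod_lt[OF assms] by auto
  have "enc lam (fst (dec lam (q div dd))) (snd (dec lam (q div dd))) = q div dd" by (rule enc_dec[OF u])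
  hence "q = idx (fst (dec lam (q div dd))) (snd (dec lam (q div dd))) (q mod dd)"
    unfolding idx_def by simp
  thus ?thesis using that dec_bounds[OF u] r by blast
qed

lemma idx_eq_iff: assumes "i < ss" "l < lam ! i" "r < dd" "i' < ss" "l' < lam ! i'" "r' < dd"
  shows "idx i l r = idx i' l' r' \<longleftrightarrow> i = i' \<and> l = l' \<and> r = r'"
proof
  assume e: "idx i l r = idx i' l' r'"
  hence "enc lam i l = enc lam i' l'" using idx_div assms by metis
  hence "i = i' \<and> l = l'" using enc_inj assms by blast
  moreover have "r = r'" using e idx_mod assms by metis
  ultimately show "i = i' \<and> l = l' \<and> r = r'" by simp
qed simp

lemma Phi_idx: assumes "i < ss" "l < lam ! i" "r < dd" "j < ss" "l' < lam ! j" "r' < dd"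
  shows "Phi M $$ (idx i l r, idx j l' r') =
    (if l' \<le> l then coord r (coeff (M $$ (i, j)) (l - l') * \<alpha> ^ r') else 0)"
proof -
  have e: "enc lam i l < nn" "dec lam (enc lam i l) = (i, l)" "enc lam j l' < nn" "dec lam (enc lam j l') = (j, l')"
    using enc_less dec_enc assms by auto
  show ?thesis unfolding Phi_def using idx_lt[OF assms(1-3)] idx_lt[OF assms(4-6)] assms e
    by (simp add: Exm_index idx_div idx_mod Psi_index)
qed

lemma Phi_scal_idx: assumes "i < ss" "l < lam ! i" "r < dd" "j < ss" "l' < lam ! j" "r' < dd"
  shows "Phi (scal z) $$ (idx i l r, idx j l' r') =
    (if i = j \<and> l' \<le> l then coord r (coeff z (l - l') * \<alpha> ^ r') else 0)"
  using Phi_idx[OF assms, of "scal z"] assms by simp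

lemma coord_pow_Suc: "Suc j < dd \<Longrightarrow> i < dd \<Longrightarrow> coord i (\<alpha> * \<alpha> ^ j) = (if i = Suc j then 1 else 0)"
  using coord_pow[of "Suc j" i] by simp

lemma D_col: assumes "i < ss" "l < lam ! i" "Suc r < dd"
  shows "\<forall>q<nn * dd. Phi (scal [:\<alpha>:]) $$ (q, idx i l r) = (if q = idx i l (Suc r) then 1 else 0)"
proof (intro allI impI)
  fix q assume "q < nn * dd"
  then obtain i1 l1 r1 where b: "i1 < ss" "l1 < lam ! i1" "r1 < dd" and q: "q = idx i1 l1 r1" by (rule idx_cases)
  have r: "r < dd" using assms by simp
  show "Phi (scal [:\<alpha>:]) $$ (q, idx i l r) = (if q = idx i l (Suc r) then 1 else 0)"
    unfolding q Phi_scal_idx[OF b assms(1,2) r] idx_eq_iff[OF b assms(1,2,3)]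
    using coord_pow_Suc[OF assms(3) b(3)] by (auto simp: coeff_c)
qed

lemma N_col: assumes "i < ss" "Suc l < lam ! i" "r < dd"
  shows "\<forall>q<nn * dd. Phi (scal [:0, 1:]) $$ (q, idx i l r) = (if q = idx i (Suc l) r then 1 else 0)"
proof (intro allI impI)
  fix q assume "q < nn * dd"
  then obtain i1 l1 r1 where b: "i1 < ss" "l1 < lam ! i1" "r1 < dd" and q: "q = idx i1 l1 r1" by (rule idx_cases)
  have l: "l < lam ! i" using assms by simp
  show "Phi (scal [:0, 1:]) $$ (q, idx i l r) = (if q = idx i (Suc l) r then 1 else 0)"
    unfolding q Phi_scal_idx[OF b assms(1) l assms(3)] idx_eq_iff[OF b assms]
    using coord_pow[OF assms(3) b(3)] by (auto simp: coeff_x)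
qed

lemma N_last: assumes "i < ss" "r < dd"
  shows "\<forall>q<nn * dd. Phi (scal [:0, 1:]) $$ (q, idx i (lam ! i - 1) r) = 0"
proof (intro allI impI)
  fix q assume "q < nn * dd"
  then obtain i1 l1 r1 where b: "i1 < ss" "l1 < lam ! i1" "r1 < dd" and q: "q = idx i1 l1 r1" by (rule idx_cases)
  have p0: "0 < lam ! i" using pos assms(1) by auto
  hence l: "lam ! i - 1 < lam ! i" by simp
  show "Phi (scal [:0, 1:]) $$ (q, idx i (lam ! i - 1) r) = 0"
    unfolding q Phi_scal_idx[OF b assms(1) l assms(2)] using b(2) p0 by (auto simp: coeff_x)
qed

lemma N_row: assumes "i < ss" "l < lam ! i" "r < dd"
  shows "\<forall>w<nn * dd. Phi (scal [:0, 1:]) $$ (idx i l r, w) = (if 0 < l \<and> w = idx i (l - 1) r then 1 else 0)"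
proof (intro allI impI)
  fix w assume "w < nn * dd"
  then obtain j l' r' where b: "j < ss" "l' < lam ! j" "r' < dd" and w: "w = idx j l' r'" by (rule idx_cases)
  have "0 < l \<Longrightarrow> l - 1 < lam ! i" using assms by simp
  thus "Phi (scal [:0, 1:]) $$ (idx i l r, w) = (if 0 < l \<and> w = idx i (l - 1) r then 1 else 0)"
    unfolding w Phi_scal_idx[OF assms b] using coord_pow[OF b(3) assms(3)] idx_eq_iff[OF b assms(1) _ assms(3)]
    by (cases l) (auto simp: coeff_x)
qed

end

context cpxl begin

lemma surj_Phi: assumes B: "B \<in> carrier_mat (nn * dd) (nn * dd)" and BJ: "B * Jm = Jm * B"
  shows "\<exists>M \<in> part_alg_carrier lam. Phi M = B"
proof -
  let ?N = "nn * dd"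
  have d0: "0 < dd" by (rule deg_pos)
  define D where "D = Phi (scal [:\<alpha>:])"
  define X where "X = Phi (scal [:0, 1:])"
  have Dc: "D \<in> carrier_mat ?N ?N" and Xc: "X \<in> carrier_mat ?N ?N" unfolding D_def X_def by auto
  have DB: "D * B = B * D" using R0_alpha[OF B BJ] unfolding R0_def D_def by simp
  have XB: "X * B = B * X" using R0_x[OF B BJ] unfolding R0_def X_def by simp
  define Mx where "Mx = mat ss ss (\<lambda>(i, j). \<Sum>l<lam ! i.
      Polynomial.monom (\<Sum>r<dd. \<phi> (B $$ (idx i l r, idx j 0 0)) * \<alpha> ^ r) l)"
  have Mxc: "Mx \<in> carrier_mat ss ss" unfolding Mx_def by simp
  have Mx_coeff: "coeff (Mx $$ (i, j)) l = (if l < lam ! i then \<Sum>r<dd. \<phi> (B $$ (idx i l r, idx j 0 0)) * \<alpha> ^ r else 0)"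
    if "i < ss" "j < ss" for i j l
    using that by (simp add: Mx_def coeff_sum coeff_monom)
  have Mx_coord: "coord r (coeff (Mx $$ (i, j)) l) = B $$ (idx i l r, idx j 0 0)"
    if ij: "i < ss" "j < ss" "l < lam ! i" "r < dd" for i j l r
  proof -
    have "coeff (Mx $$ (i, j)) l = (\<Sum>r<dd. \<phi> (B $$ (idx i l r, idx j 0 0)) * \<alpha> ^ r)"
      using Mx_coeff[OF ij(1,2)] ij(3) by simp
    from coord_unique[OF this ij(4)] show ?thesis .
  qed
  have shift: "t < lam ! j \<longrightarrow> (\<forall>i<ss. \<forall>l1<lam ! i. \<forall>r<dd.
     B $$ (idx i l1 r, idx j t 0) = (if t \<le> l1 then B $$ (idx i (l1 - t) r, idx j 0 0) else 0))"
    if j: "j < ss" for j t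
  proof (induct t)
    case 0 show ?case by simp
  next
    case (Suc t)
    show ?case
    proof (intro impI allI)
      fix i l1 r assume St: "Suc t < lam ! j" and i: "i < ss" and l1: "l1 < lam ! i" and r: "r < dd"
      have t: "t < lam ! j" using St by simp
      have H: "\<forall>i<ss. \<forall>l1<lam ! i. \<forall>r<dd.
        B $$ (idx i l1 r, idx j t 0) = (if t \<le> l1 then B $$ (idx i (l1 - t) r, idx j 0 0) else 0)"
        using Suc.hyps t by blast
      have a: "idx i l1 r < ?N" using idx_lt i l1 r by blast
      have c: "idx j t 0 < ?N" "idx j (Suc t) 0 < ?N" using idx_lt j t St d0 by blast+
      have l1': "l1 - 1 < lam ! i" using l1 by simp
      have a': "idx i (l1 - 1) r < ?N" using idx_lt i l1' r by blast
      have "B $$ (idx i l1 r, idx j (Suc t) 0) = (B * X) $$ (idx i l1 r, idx j t 0)"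
        using mult_col_sel[OF B Xc a c N_col[OF j St d0, folded X_def]] by simp
      also have "\<dots> = (X * B) $$ (idx i l1 r, idx j t 0)" using XB by simp
      also have "\<dots> = (if 0 < l1 then B $$ (idx i (l1 - 1) r, idx j t 0) else 0)"
        by (rule mult_row_sel[OF B Xc a c(1) a' N_row[OF i l1 r, folded X_def]])
      also have "\<dots> = (if Suc t \<le> l1 then B $$ (idx i (l1 - Suc t) r, idx j 0 0) else 0)"
        using H i l1' r by (cases l1) auto
      finally show "B $$ (idx i l1 r, idx j (Suc t) 0) =
        (if Suc t \<le> l1 then B $$ (idx i (l1 - Suc t) r, idx j 0 0) else 0)" .
    qed
  qed
  have vanish: "B $$ (idx i a r, idx j 0 0) = 0"
    if i: "i < ss" and j: "j < ss" and a: "a < lam ! i - lam ! j" and r: "r < dd" for i j a r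
  proof -
    have pj: "0 < lam ! j" using pos j by auto
    have t0: "lam ! j - 1 < lam ! j" using pj by simp
    define l1 where "l1 = a + lam ! j"
    have l1: "l1 < lam ! i" "0 < l1" using a pj unfolding l1_def by auto
    have l1': "l1 - 1 < lam ! i" using l1 by simp
    have aa: "idx i l1 r < ?N" using idx_lt i l1 r by blast
    have c: "idx j (lam ! j - 1) 0 < ?N" using idx_lt j t0 d0 by blast
    have a': "idx i (l1 - 1) r < ?N" using idx_lt i l1' r by blast
    have "0 = (B * X) $$ (idx i l1 r, idx j (lam ! j - 1) 0)"
      using mult_col_zero[OF B Xc aa c N_last[OF j d0, folded X_def]] by simp
    also have "\<dots> = (X * B) $$ (idx i l1 r, idx j (lam ! j - 1) 0)" using XB by simp
    also have "\<dots> = B $$ (idx i (l1 - 1) r, idx j (lam ! j - 1) 0)"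
      using mult_row_sel[OF B Xc aa c a' N_row[OF i l1(1) r, folded X_def]] l1(2) by simp
    also have "\<dots> = B $$ (idx i (l1 - 1 - (lam ! j - 1)) r, idx j 0 0)"
      using shift[OF j, of "lam ! j - 1"] t0 i l1' r l1 unfolding l1_def by auto
    also have "l1 - 1 - (lam ! j - 1) = a" using pj unfolding l1_def by simp
    finally show ?thesis by simp
  qed
  have "\<forall>i<ss. \<forall>j<ss. Polynomial.monom 1 (lam ! i - lam ! j) dvd Mx $$ (i, j)"
  proof (intro allI impI)
    fix i j assume i: "i < ss" and j: "j < ss"
    show "Polynomial.monom 1 (lam ! i - lam ! j) dvd Mx $$ (i, j)"
      unfolding monom_1_dvd_iff'
    proof (intro allI impI)
      fix a assume a: "a < lam ! i - lam ! j"
      hence al: "a < lam ! i" by simp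
      have "coord r (coeff (Mx $$ (i, j)) a) = coord r 0" if "r < dd" for r
        using Mx_coord[OF i j al that] vanish[OF i j a that] by simp
      thus "coeff (Mx $$ (i, j)) a = 0" by (intro coord_eqI) simp
    qed
  qed
  hence Mx_in: "Mx \<in> part_alg_carrier lam" using Mxc unfolding part_alg_carrier_def by simp
  have PMc: "Phi Mx \<in> carrier_mat ?N ?N" by simp
  have PD: "Phi Mx * D = D * Phi Mx" unfolding D_def
    using Phi_mult[OF Mx_in scal_carrier] Phi_mult[OF scal_carrier Mx_in] scal_comm[OF Mxc] by simp
  have PX: "Phi Mx * X = X * Phi Mx" unfolding X_def
    using Phi_mult[OF Mx_in scal_carrier] Phi_mult[OF scal_carrier Mx_in] scal_comm[OF Mxc] by simp
  have base: "\<forall>a<?N. B $$ (a, idx j 0 0) = Phi Mx $$ (a, idx j 0 0)" if j: "j < ss" for j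
  proof (intro allI impI)
    fix a assume "a < ?N"
    then obtain i l r where b: "i < ss" "l < lam ! i" "r < dd" and a: "a = idx i l r" by (rule idx_cases)
    have pj: "0 < lam ! j" using pos j by auto
    show "B $$ (a, idx j 0 0) = Phi Mx $$ (a, idx j 0 0)"
      unfolding a Phi_idx[OF b j pj d0] using Mx_coord[OF b(1) j b(2) b(3)] by simp
  qed
  have cols_t: "t < lam ! j \<longrightarrow> (\<forall>a<?N. B $$ (a, idx j t 0) = Phi Mx $$ (a, idx j t 0))"
    if j: "j < ss" for j t
  proof (induct t)
    case 0 show ?case using base[OF j] by simp
  next
    case (Suc t)
    show ?case
    proof
      assume St: "Suc t < lam ! j"
      have t: "t < lam ! j" using St by simp
      have c: "idx j t 0 < ?N" "idx j (Suc t) 0 < ?N" using idx_lt j t St d0 by blast+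
      show "\<forall>a<?N. B $$ (a, idx j (Suc t) 0) = Phi Mx $$ (a, idx j (Suc t) 0)"
        by (rule col_transfer[OF B PMc Xc XB[symmetric] PX c N_col[OF j St d0, folded X_def]])
           (use Suc.hyps t in blast)
    qed
  qed
  have cols: "r < dd \<longrightarrow> (\<forall>a<?N. B $$ (a, idx j t r) = Phi Mx $$ (a, idx j t r))"
    if j: "j < ss" and t: "t < lam ! j" for j t r
  proof (induct r)
    case 0 show ?case using cols_t[OF j] t by blast
  next
    case (Suc r)
    show ?case
    proof
      assume Sr: "Suc r < dd"
      have r: "r < dd" using Sr by simp
      have c: "idx j t r < ?N" "idx j t (Suc r) < ?N" using idx_lt j t r Sr by blast+
      show "\<forall>a<?N. B $$ (a, idx j t (Suc r)) = Phi Mx $$ (a, idx j t (Suc r))"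
        by (rule col_transfer[OF B PMc Dc DB[symmetric] PD c D_col[OF j t Sr, folded D_def]])
           (use Suc.hyps r in blast)
    qed
  qed
  show ?thesis
  proof (intro bexI[OF _ Mx_in] eq_matI)
    fix a c assume "a < dim_row B" "c < dim_col B"
    hence a: "a < ?N" and c: "c < ?N" using B by auto
    obtain j t r where jtr: "j < ss" "t < lam ! j" "r < dd" and ce: "c = idx j t r"
      using idx_cases[OF c] by blast
    show "Phi Mx $$ (a, c) = B $$ (a, c)" using cols[OF jtr(1,2), of r] jtr(3) a ce by simp
  qed (use B in auto)
qed

lemma Phi_surj: "Phi ` carrier (part_alg lam) = carrier (centralizer_ring Jm)"
proof
  show "Phi ` carrier (part_alg lam) \<subseteq> carrier (centralizer_ring Jm)"
    using ring_hom_closed[OF Phi_hom] by blast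
  show "carrier (centralizer_ring Jm) \<subseteq> Phi ` carrier (part_alg lam)"
  proof
    fix B assume "B \<in> carrier (centralizer_ring Jm)"
    hence B: "B \<in> carrier_mat (nn * dd) (nn * dd)" and BJ: "B * Jm = Jm * B"
      unfolding centralizer_carrier by auto
    from surj_Phi[OF B BJ] obtain M where "M \<in> part_alg_carrier lam" "Phi M = B" by blast
    thus "B \<in> Phi ` carrier (part_alg lam)" unfolding part_alg_def by force
  qed
qed

theorem main_loc: "\<exists>h. h \<in> ring_iso (trunc_poly_alg lam) (centralizer_ring Jm) \<and>
   (\<forall>c. h (part_ideal lam +>\<^bsub>part_alg lam\<^esub> ([:\<phi> c:] \<cdot>\<^sub>m 1\<^sub>m ss)) = c \<cdot>\<^sub>m 1\<^sub>m (nn * dd))"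
proof (intro exI conjI allI)
  show "(\<lambda>X. the_elem (Phi ` X)) \<in> ring_iso (trunc_poly_alg lam) (centralizer_ring Jm)"
    using ring_hom_ring.FactRing_iso_set[OF Phi_hom_ring Phi_surj]
    unfolding trunc_poly_alg_def Phi_kernel .
  fix c
  have x: "scal [:\<phi> c:] \<in> carrier (part_alg lam)" using scal_carrier unfolding part_alg_def by simp
  show "the_elem (Phi ` (part_ideal lam +>\<^bsub>part_alg lam\<^esub> scal [:\<phi> c:])) = c \<cdot>\<^sub>m 1\<^sub>m (nn * dd)"
    using ring_hom_ring.the_elem_simp[OF Phi_hom_ring x] Phi_const unfolding Phi_kernel by simp
qed

end

theorem mainTheorem4:
  fixes p :: "'a::field poly" and \<phi> :: "'a \<Rightarrow> 'b::field" and \<alpha> :: 'b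
    and lam :: "nat list" and n :: nat
  assumes hom: "field_hom \<phi>"
    and monic: "lead_coeff p = 1"
    and irr: "irreducible p"
    and sep: "separable_poly p"
    and root: "poly (map_poly \<phi> p) \<alpha> = 0"
    and gen: "\<forall>y::'b. \<exists>q::'a poly. y = poly (map_poly \<phi> q) \<alpha>"
    and part: "is_partition lam n"
  shows "\<exists>h. h \<in> ring_iso (trunc_poly_alg lam)
                (centralizer_ring (jordan_mat lam (companion_mat p)))
           \<and> (\<forall>c::'a. h (part_ideal lam +>\<^bsub>part_alg lam\<^esub>
                          ([:\<phi> c:] \<cdot>\<^sub>m 1\<^sub>m (length lam)))
                     = c \<cdot>\<^sub>m 1\<^sub>m (n * degree p))"
proof -
  have pos: "\<forall>m\<in>set lam. 0 < m" and n: "sum_list lam = n" using part unfolding is_partition_def by auto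
  have C: "cpx p \<phi> \<alpha>" by (rule cpx.intro[OF hom monic irr sep root gen])
  have "cpxl p \<phi> \<alpha> lam" by (rule cpxl.intro[OF C]) (unfold cpxl_axioms_def, rule pos)
  then interpret cpxl p \<phi> \<alpha> lam .
  from main_loc show ?thesis unfolding n .
qed


end
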